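(* Let $\mathcal{C}l(E)$ be a general Clifford algebra on $E=\{1,\dots,p\}$ and $n\ge1$. For $\mathcal{C}l(E)$-symmetric matrices $\mathcal M$ with the diffusion operator $\mathrm L_{\mathbb E,\mathcal Cl}$, let $P(X)=\det(\mathcal M-X\,\mathrm{Id})$ and $U(X)=(\mathcal M-X\,\mathrm{Id})^{-1}$. Then $U(X)$ is again $\mathcal{C}l(E)$-symmetric, i.e. its blocks are $U(X)^{A,B}=(A\Delta B|B)U(X)^{A\Delta B}$ for matrices $U(X)^C:=U(X)^{C,\emptyset}$, and $$\Gamma_{\mathbb E,\mathcal Cl}(P(X),P(Y))=\frac{2^p}{Y-X}\big(P'(X)P(Y)-P'(Y)P(X)\big),$$ $$\frac{\mathrm L_{\mathbb E,\mathcal Cl}(P)}{P}=\Gamma_{\mathbb E,\mathcal Cl}(\log P(X),\log P(X))-\frac12\Big(\sum_{A\subset E}(A|A)\Big)\mathrm{trace}\big(U(X)^2\big)-2^{p-1}\sum_{C\subset E}(C|C)H(C)\big(\mathrm{trace}\,U(X)^C\big)^2,$$ where $H(C)=\sum_{A\subset E}(A|C)(C|A)$. Moreover $\mathrm{trace}(U(X)^2)=\frac{P'^2}{P^2}-\frac{P''}{P}$.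
   Context: General Clifford algebra: real algebra with basis $(\omega_A)_{A\subset E}$, $\omega_\emptyset$ the unit, product $\omega_A\omega_B=(A|B)\,\omega_{A\Delta B}$ ($A\Delta B$ the symmetric difference), where $(A|B)=\prod_{i\in A,j\in B}(i|j)$, with $(i|j)=1$ for $i<j$ and arbitrary fixed signs $(j|i)\in\{\pm1\}$ ($i<j$), $(i|i)\in\{\pm1\}$. $\mathcal Cl(E)$-symmetric matrix: given real $n\times n$ matrices $M^C$, $C\subset E$, with $(M^C)^T=(C|C)M^C$, $\mathcal M$ is the real $(n2^p)\times(n2^p)$ block matrix with blocks indexed by pairs $(A,B)$ of subsets of $E$, block $\mathcal M^{A,B}=(A\Delta B|B)M^{A\Delta B}$. $\mathrm L_{\mathbb E,\mathcal Cl}$ is the diffusion operator in the coordinates $M^C_{ij}$ determined by $\mathrm L(M^C_{ij})=0$, $\Gamma(M^A_{ij},M^B_{kl})=\tfrac12\delta_{A,B}(\delta_{ik}\delta_{jl}+(A|A)\delta_{il}\delta_{jk})$, via the chain rule $\mathrm L(\Phi(f))=\sum_i\partial_i\Phi\,\mathrm Lf_i+\sum_{ij}\partial^2_{ij}\Phi\,\Gamma(f_i,f_j)$, $\Gamma(f,g)=\tfrac12(\mathrm L(fg)-f\mathrm Lg-g\mathrm Lf)$. Primes denote derivatives in $X$. *)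

theory Defs
  imports "HOL-Analysis.Analysis"
begin

text \<open>Signs of the general Clifford algebra on a finite totally ordered set E (the type 'e):
  s i j stands for (i|j).\<close>

definition sign_ok :: "('e::linorder \<Rightarrow> 'e \<Rightarrow> real) \<Rightarrow> bool" where
  "sign_ok s \<longleftrightarrow> (\<forall>i j. i < j \<longrightarrow> s i j = 1 \<and> (s j i = 1 \<or> s j i = -1))
                 \<and> (\<forall>i. s i i = 1 \<or> s i i = -1)"

definition clsgn :: "('e \<Rightarrow> 'e \<Rightarrow> real) \<Rightarrow> 'e set \<Rightarrow> 'e set \<Rightarrow> real" where
  "clsgn s A B = (\<Prod>i\<in>A. \<Prod>j\<in>B. s i j)"

definition symd :: "'a set \<Rightarrow> 'a set \<Rightarrow> 'a set" where
  "symd A B = (A - B) \<union> (B - A)"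

definition clsym_coeffs :: "('e::finite \<Rightarrow> 'e \<Rightarrow> real) \<Rightarrow> real^'n^'n^('e set) \<Rightarrow> bool" where
  "clsym_coeffs s m \<longleftrightarrow> (\<forall>C. transpose (m $ C) = clsgn s C C *\<^sub>R (m $ C))"

definition cl_block_matrix ::
  "('e::finite \<Rightarrow> 'e \<Rightarrow> real) \<Rightarrow> real^'n^'n^('e set) \<Rightarrow> real^('e set \<times> 'n)^('e set \<times> 'n)" where
  "cl_block_matrix s m = (\<chi> a b. clsgn s (symd (fst a) (fst b)) (fst b)
                              * m $ (symd (fst a) (fst b)) $ snd a $ snd b)"

definition coord :: "'e::finite set \<Rightarrow> 'n \<Rightarrow> 'n \<Rightarrow> real^'n^'n^('e set)" where
  "coord C i j = (\<chi> C' k l. if C' = C \<and> k = i \<and> l = j then 1 else 0)"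

definition pd :: "(real^'n^'n^('e::finite set) \<Rightarrow> real) \<Rightarrow> 'e set \<Rightarrow> 'n \<Rightarrow> 'n \<Rightarrow> real^'n^'n^('e set) \<Rightarrow> real" where
  "pd F C i j m = deriv (\<lambda>t. F (m + t *\<^sub>R coord C i j)) 0"

text \<open>Gamma(M^A_ij, M^A_kl) (zero for distinct subsets).\<close>
definition gam_coord :: "('e \<Rightarrow> 'e \<Rightarrow> real) \<Rightarrow> 'e set \<Rightarrow> 'n \<Rightarrow> 'n \<Rightarrow> 'n \<Rightarrow> 'n \<Rightarrow> real" where
  "gam_coord s A i j k l = ((if i = k \<and> j = l then 1 else 0)
                           + clsgn s A A * (if i = l \<and> j = k then 1 else 0)) / 2"

text \<open>The diffusion operator L_{E,Cl}: L(M^C_ij)=0, so by the chain rule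
  L F = sum of Gamma(x_a,x_b) times the second partial derivatives of F.\<close>
definition LCl :: "('e::finite \<Rightarrow> 'e \<Rightarrow> real) \<Rightarrow> (real^'n^'n^('e set) \<Rightarrow> real) \<Rightarrow> real^'n^'n^('e set) \<Rightarrow> real" where
  "LCl s F m = (\<Sum>A\<in>UNIV. \<Sum>i\<in>UNIV. \<Sum>j\<in>UNIV. \<Sum>k\<in>UNIV. \<Sum>l\<in>UNIV.
                  gam_coord s A i j k l * pd (pd F A k l) A i j m)"

definition GammaCl :: "('e::finite \<Rightarrow> 'e \<Rightarrow> real) \<Rightarrow> (real^'n^'n^('e set) \<Rightarrow> real)
                      \<Rightarrow> (real^'n^'n^('e set) \<Rightarrow> real) \<Rightarrow> real^'n^'n^('e set) \<Rightarrow> real" where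
  "GammaCl s F G m = (LCl s (\<lambda>x. F x * G x) m - F m * LCl s G m - G m * LCl s F m) / 2"

definition Pcl :: "('e::finite \<Rightarrow> 'e \<Rightarrow> real) \<Rightarrow> real^'n^'n^('e set) \<Rightarrow> real \<Rightarrow> real" where
  "Pcl s m X = det (cl_block_matrix s m - X *\<^sub>R mat 1)"

end

theory Submission
  imports Defs "HOL-Computational_Algebra.Polynomial"
begin

lemma sign_ok_pm: assumes "sign_ok s" shows "s i j = 1 \<or> s i j = -1"
  using assms unfolding sign_ok_def
  by (metis linorder_neqE)

lemma sign_ok_sq: assumes "sign_ok s" shows "s i j * s i j = 1"
  using sign_ok_pm[OF assms, of i j] by auto

lemma prod_symd_pm:
  fixes g :: "'a \<Rightarrow> real"
  assumes "finite A" "finite B" "\<And>i. g i * g i = 1"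
  shows "prod g (symd A B) = prod g A * prod g B"
proof -
  have "prod g A * prod g B = prod g (A \<union> B) * prod g (A \<inter> B)"
    using prod.union_inter[OF assms(1,2), of g] by simp
  also have "A \<union> B = symd A B \<union> (A \<inter> B)" by (auto simp: symd_def)
  also have "prod g (symd A B \<union> (A \<inter> B)) = prod g (symd A B) * prod g (A \<inter> B)"
    by (rule prod.union_disjoint) (use assms in \<open>auto simp: symd_def\<close>)
  finally have 1: "prod g A * prod g B = prod g (symd A B) * (prod g (A \<inter> B) * prod g (A \<inter> B))"
    by (simp add: mult.assoc)
  have "prod g (A \<inter> B) * prod g (A \<inter> B) = prod (\<lambda>i. g i * g i) (A \<inter> B)"
    by (simp add: prod.distrib)
  also have "\<dots> = 1" using assms(3) by simp
  finally have "prod g (A \<inter> B) * prod g (A \<inter> B) = 1" .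
  with 1 show ?thesis by simp
qed

context fixes s :: "'e::{finite,linorder} \<Rightarrow> 'e \<Rightarrow> real" assumes sok: "sign_ok s"
begin

lemma clsgn_sq: "clsgn s A B * clsgn s A B = 1"
  unfolding clsgn_def
  by (simp add: prod.distrib[symmetric] sign_ok_sq[OF sok])

lemma clsgn_symd_left: "clsgn s (symd A B) C = clsgn s A C * clsgn s B C"
  unfolding clsgn_def
  by (rule prod_symd_pm) (auto simp: prod.distrib[symmetric] sign_ok_sq[OF sok])

lemma clsgn_symd_right: "clsgn s A (symd B C) = clsgn s A B * clsgn s A C"
  unfolding clsgn_def
  by (subst prod_symd_pm) (auto simp: prod.distrib[symmetric] sign_ok_sq[OF sok])

end

lemma clsgn_empty[simp]: "clsgn s {} B = 1" "clsgn s A {} = 1"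
  by (auto simp: clsgn_def)

lemma symd_simps[simp]: "symd A (symd A B) = B" "symd (symd A B) B = A" "symd A A = {}"
  "symd A {} = A" "symd {} A = A"
  by (auto simp: symd_def)

lemma symd_comm: "symd A B = symd B A" by (auto simp: symd_def)
lemma symd_assoc: "symd (symd A B) C = symd A (symd B C)" by (auto simp: symd_def)


lemma blk_entry: "cl_block_matrix s m $ a $ b = clsgn s (symd (fst a) (fst b)) (fst b)
                              * m $ (symd (fst a) (fst b)) $ snd a $ snd b"
  by (simp add: cl_block_matrix_def)

lemma blk_add: "cl_block_matrix s (x + y) = cl_block_matrix s x + cl_block_matrix s y"
  by (simp add: cl_block_matrix_def vec_eq_iff algebra_simps)

lemma blk_scale: "cl_block_matrix s (c *\<^sub>R x) = c *\<^sub>R cl_block_matrix s x"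
  by (simp add: cl_block_matrix_def vec_eq_iff algebra_simps)

lemma blk_diff: "cl_block_matrix s (x - y) = cl_block_matrix s x - cl_block_matrix s y"
  by (simp add: cl_block_matrix_def vec_eq_iff algebra_simps)

definition idc :: "real^'n^'n^('e::finite set)" where
  "idc = (\<chi> C i j. if C = {} \<and> i = j then 1 else 0)"

lemma blk_idc: "cl_block_matrix s idc = mat 1"
  by (auto simp: cl_block_matrix_def idc_def vec_eq_iff mat_def symd_def)

definition cmul :: "('e \<Rightarrow> 'e \<Rightarrow> real) \<Rightarrow> real^'n^'n^('e::finite set) \<Rightarrow> real^'n^'n^('e set) \<Rightarrow> real^'n^'n^('e set)" where
  "cmul s W V = (\<chi> C i j. \<Sum>A\<in>UNIV. \<Sum>r\<in>UNIV. clsgn s A (symd A C) * W$A$i$r * V$(symd A C)$r$j)"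

lemma sum_pair_UNIV: "(\<Sum>y\<in>(UNIV::('a::finite \<times> 'b::finite) set). f y) = (\<Sum>a\<in>UNIV. \<Sum>b\<in>UNIV. f (a,b))"
proof -
  have "(\<Sum>a\<in>UNIV. \<Sum>b\<in>UNIV. f (a,b)) = (\<Sum>(a,b)\<in>UNIV \<times> UNIV. f (a,b))"
    by (rule sum.cartesian_product)
  then show ?thesis by simp
qed

lemma sum_symd_reindex: "(\<Sum>D\<in>(UNIV::'e::finite set set). f D) = (\<Sum>A\<in>UNIV. f (symd A0 A))"
  by (rule sum.reindex_bij_witness[of _ "symd A0" "symd A0"]) auto

context fixes s :: "'e::{finite,linorder} \<Rightarrow> 'e \<Rightarrow> real" assumes sok: "sign_ok s"
begin

lemmas cls = clsgn_symd_left[OF sok] clsgn_symd_right[OF sok]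

lemma blk_mult: fixes W V :: "real^'n::finite^'n^'e set" shows "cl_block_matrix s W ** cl_block_matrix s V = cl_block_matrix s (cmul s W V)"
proof -
  { fix A0 B0 :: "'e set" and k l :: 'n
    have "(cl_block_matrix s W ** cl_block_matrix s V) $ (A0,k) $ (B0,l)
       = (\<Sum>D\<in>UNIV. \<Sum>r\<in>UNIV. clsgn s (symd A0 D) D * W$(symd A0 D)$k$r *
              (clsgn s (symd D B0) B0 * V$(symd D B0)$r$l))"
      by (simp add: matrix_matrix_mult_def blk_entry sum_pair_UNIV)
    also have "\<dots> = (\<Sum>A\<in>UNIV. \<Sum>r\<in>UNIV. clsgn s A (symd A0 A) * W$A$k$r *
              (clsgn s (symd (symd A0 A) B0) B0 * V$(symd (symd A0 A) B0)$r$l))"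
      by (subst sum_symd_reindex[of _ A0]) simp
    also have "\<dots> = (\<Sum>A\<in>UNIV. \<Sum>r\<in>UNIV. clsgn s (symd A0 B0) B0 * (clsgn s A (symd A (symd A0 B0)) * W$A$k$r *
              V$(symd A (symd A0 B0))$r$l))"
    proof (intro sum.cong refl)
      fix A r
      have e: "symd (symd A0 A) B0 = symd A (symd A0 B0)" by (auto simp: symd_def)
      have "clsgn s A (symd A0 A) * clsgn s (symd (symd A0 A) B0) B0
           = clsgn s (symd A0 B0) B0 * clsgn s A (symd A (symd A0 B0))"
        by (simp add: cls mult_ac)
      then show "clsgn s A (symd A0 A) * W$A$k$r *
              (clsgn s (symd (symd A0 A) B0) B0 * V$(symd (symd A0 A) B0)$r$l)
         = clsgn s (symd A0 B0) B0 * (clsgn s A (symd A (symd A0 B0)) * W$A$k$r *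
              V$(symd A (symd A0 B0))$r$l)"
        unfolding e 
        by (smt (verit, ccfv_threshold) mult.commute mult.left_commute)
    qed
    also have "\<dots> = cl_block_matrix s (cmul s W V) $ (A0,k) $ (B0,l)"
      by (simp add: blk_entry cmul_def sum_distrib_left mult.assoc)
    finally have "(cl_block_matrix s W ** cl_block_matrix s V) $ (A0,k) $ (B0,l)
        = cl_block_matrix s (cmul s W V) $ (A0,k) $ (B0,l)" . }
  then show ?thesis by (simp add: vec_eq_iff)
qed

lemma blk_sym: fixes m :: "real^'n::finite^'n^'e set" assumes "clsym_coeffs s m" shows "transpose (cl_block_matrix s m) = cl_block_matrix s m"
proof -
  { fix A B :: "'e set" and k l :: 'n
    have t: "m $ (symd A B) $ l $ k = clsgn s (symd A B) (symd A B) * m $ (symd A B) $ k $ l"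
    proof -
      have "transpose (m $ (symd A B)) $ k $ l = (clsgn s (symd A B) (symd A B) *\<^sub>R m $ (symd A B)) $ k $ l"
        using assms unfolding clsym_coeffs_def by simp
      then show ?thesis by (simp add: transpose_def)
    qed
    have "transpose (cl_block_matrix s m) $ (A,k) $ (B,l) = clsgn s (symd B A) A * m $ (symd B A) $ l $ k"
      by (simp add: transpose_def blk_entry)
    also have "\<dots> = clsgn s (symd A B) A * clsgn s (symd A B) (symd A B) * m $ (symd A B) $ k $ l"
      by (simp add: symd_comm[of B A] t)
    also have "clsgn s (symd A B) A * clsgn s (symd A B) (symd A B) = clsgn s (symd A B) B"
    proof -
      have "clsgn s (symd A B) (symd A (symd A B)) = clsgn s (symd A B) A * clsgn s (symd A B) (symd A B)"
        by (rule cls(2))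
      then have "clsgn s (symd A B) B = clsgn s (symd A B) A * clsgn s (symd A B) (symd A B)"
        by simp
      then show ?thesis by simp
    qed
    finally have "transpose (cl_block_matrix s m) $ (A,k) $ (B,l) = cl_block_matrix s m $ (A,k) $ (B,l)"
      by (simp add: blk_entry) }
  then show ?thesis by (simp add: vec_eq_iff)
qed

end

definition colE :: "real^('e::finite set \<times> 'n::finite)^('e set \<times> 'n) \<Rightarrow> real^'n^'n^('e set)" where
  "colE U = (\<chi> C i j. U $ (C, i) $ ({}, j))"

lemma invertible_inv:
  fixes Q :: "real^'k::finite^'k"
  assumes "det Q \<noteq> 0"
  shows "Q ** matrix_inv Q = mat 1" "matrix_inv Q ** Q = mat 1"
proof -
  have "invertible Q" using assms invertible_det_nz by blast
  then have "\<exists>A'. Q ** A' = mat 1 \<and> A' ** Q = mat 1" by (simp add: invertible_def)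
  then have "Q ** matrix_inv Q = mat 1 \<and> matrix_inv Q ** Q = mat 1"
    unfolding matrix_inv_def by (rule someI_ex)
  then show "Q ** matrix_inv Q = mat 1" "matrix_inv Q ** Q = mat 1" by auto
qed

lemma transpose_diff: "transpose (A - B) = transpose A - transpose (B::real^'a^'b)"
  by (simp add: transpose_def vec_eq_iff)

lemma idc_sym: "clsym_coeffs s (idc :: real^'n::finite^'n^'e::finite set)"
  unfolding clsym_coeffs_def
proof
  fix C :: "'e set"
  show "transpose (idc $ C) = clsgn s C C *\<^sub>R (idc :: real^'n::finite^'n^'e::finite set) $ C"
  proof (cases "C = {}")
    case True
    then show ?thesis unfolding vec_eq_iff by (simp add: idc_def transpose_def)
  next
    case False
    then show ?thesis unfolding vec_eq_iff by (simp add: idc_def transpose_def)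
  qed
qed

lemma clsym_diff: "clsym_coeffs s x \<Longrightarrow> clsym_coeffs s y \<Longrightarrow> clsym_coeffs s (x - y)"
  unfolding clsym_coeffs_def by (simp add: transpose_diff scaleR_diff_right)

lemma clsym_scale: "clsym_coeffs s x \<Longrightarrow> clsym_coeffs s (c *\<^sub>R x)"
  unfolding clsym_coeffs_def by (simp add: transpose_scalar)

lemma Q_blk: "cl_block_matrix s m - X *\<^sub>R mat 1 = cl_block_matrix s (m - X *\<^sub>R idc)"
  by (simp add: blk_diff blk_scale blk_idc)

context fixes s :: "'e::{finite,linorder} \<Rightarrow> 'e \<Rightarrow> real" assumes sok: "sign_ok s"
begin

lemma inv_clifford:
  fixes W :: "real^'n::finite^'n^'e set"
  assumes symW: "clsym_coeffs s W" and dz: "det (cl_block_matrix s W) \<noteq> 0"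
  shows "matrix_inv (cl_block_matrix s W) = cl_block_matrix s (colE (matrix_inv (cl_block_matrix s W)))"
    "clsym_coeffs s (colE (matrix_inv (cl_block_matrix s W)))"
proof -
  define Q where "Q = cl_block_matrix s W"
  define U where "U = matrix_inv Q"
  define V where "V = colE U"
  have QU: "Q ** U = mat 1" and UQ: "U ** Q = mat 1"
    using invertible_inv[of Q] dz by (auto simp: Q_def U_def)
  have col: "cl_block_matrix s V $ y $ ({}, j) = U $ y $ ({}, j)" for y j
    by (simp add: blk_entry V_def colE_def)
  have cm: "cmul s W V = idc"
  proof -
    { fix C i j
      have "cmul s W V $ C $ i $ j = cl_block_matrix s (cmul s W V) $ (C,i) $ ({},j)"
        by (simp add: blk_entry)
      also have "\<dots> = (Q ** cl_block_matrix s V) $ (C,i) $ ({},j)"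
        by (simp add: Q_def blk_mult[OF sok])
      also have "\<dots> = (Q ** U) $ (C,i) $ ({},j)"
        by (simp add: matrix_matrix_mult_def col)
      also have "\<dots> = idc $ C $ i $ j" by (simp add: QU mat_def idc_def)
      finally have "cmul s W V $ C $ i $ j = idc $ C $ i $ j" . }
    then show ?thesis by (simp add: vec_eq_iff)
  qed
  have QV: "Q ** cl_block_matrix s V = mat 1"
    by (simp add: Q_def blk_mult[OF sok] cm blk_idc)
  have UV: "U = cl_block_matrix s V"
  proof -
    have "U = U ** (Q ** cl_block_matrix s V)" by (simp add: QV)
    also have "\<dots> = (U ** Q) ** cl_block_matrix s V" by (simp add: matrix_mul_assoc)
    finally show ?thesis by (simp add: UQ)
  qed
  then show "matrix_inv (cl_block_matrix s W) = cl_block_matrix s (colE (matrix_inv (cl_block_matrix s W)))"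
    by (simp add: U_def V_def Q_def)
  have QT: "transpose Q = Q" using blk_sym[OF sok symW] by (simp add: Q_def)
  have TUQ: "transpose U ** Q = mat 1"
  proof -
    have "transpose U ** Q = transpose U ** transpose Q" by (simp add: QT)
    also have "\<dots> = transpose (Q ** U)" by (simp add: matrix_transpose_mul)
    finally show ?thesis by (simp add: QU)
  qed
  have UT: "transpose U = U"
  proof -
    have "transpose U = transpose U ** (Q ** U)" by (simp add: QU)
    also have "\<dots> = (transpose U ** Q) ** U" by (simp add: matrix_mul_assoc)
    finally show ?thesis by (simp add: TUQ)
  qed
  have "clsym_coeffs s V"
    unfolding clsym_coeffs_def vec_eq_iff
  proof (intro allI)
    fix C i j
    have "transpose (V $ C) $ i $ j = U $ (C,j) $ ({},i)" by (simp add: transpose_def V_def colE_def)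
    also have "\<dots> = U $ ({},i) $ (C,j)" proof -
      have "U $ (C,j) $ ({},i) = transpose U $ (C,j) $ ({},i)" by (simp add: UT)
      then show ?thesis by (simp add: transpose_def)
    qed
    also have "\<dots> = clsgn s C C * V $ C $ i $ j" by (subst UV) (simp add: blk_entry)
    finally show "transpose (V $ C) $ i $ j = (clsgn s C C *\<^sub>R V $ C) $ i $ j" by simp
  qed
  then show "clsym_coeffs s (colE (matrix_inv (cl_block_matrix s W)))"
    by (simp add: U_def V_def Q_def)
qed

end

definition Phi :: "real^'k::finite^'k \<Rightarrow> real^'k^'k \<Rightarrow> real^'k^'k \<Rightarrow> real \<Rightarrow> real" where
  "Phi M E E' t = (\<Sum>p | p permutes (UNIV::'k set). of_int (sign p) *
      (\<Sum>i\<in>UNIV. E'$i$p i * (\<Prod>j\<in>UNIV-{i}. M$j$p j + t * E$j$p j)))"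

definition Psi :: "real^'k::finite^'k \<Rightarrow> real^'k^'k \<Rightarrow> real^'k^'k \<Rightarrow> real" where
  "Psi M E E' = (\<Sum>p | p permutes (UNIV::'k set). of_int (sign p) *
      (\<Sum>i\<in>UNIV. E'$i$p i * (\<Sum>j\<in>UNIV-{i}. E$j$p j * (\<Prod>k\<in>UNIV-{i}-{j}. M$k$p k))))"

lemma det_slice_deriv:
  fixes M E E' :: "real^'k::finite^'k"
  shows "((\<lambda>u. det (M + t *\<^sub>R E + u *\<^sub>R E')) has_real_derivative Phi M E E' t) (at 0)"
proof -
  have pr: "((\<lambda>u. \<Prod>i\<in>UNIV. (M + t *\<^sub>R E + u *\<^sub>R E')$i$p i) has_real_derivative
            (\<Sum>i\<in>UNIV. E'$i$p i * (\<Prod>j\<in>UNIV-{i}. M$j$p j + t * E$j$p j))) (at 0)" for p :: "'k \<Rightarrow> 'k"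
  proof -
    have d: "((\<lambda>u. (M + t *\<^sub>R E + u *\<^sub>R E')$i$p i) has_real_derivative E'$i$p i) (at 0)" for i
    proof -
      have "((\<lambda>u. M$i$p i + t * E$i$p i + u * E'$i$p i) has_real_derivative E'$i$p i) (at 0)"
        by (auto intro!: derivative_eq_intros)
      then show ?thesis by simp
    qed
    show ?thesis
      using has_field_derivative_prod[of UNIV "\<lambda>i u. (M + t *\<^sub>R E + u *\<^sub>R E')$i$p i" "\<lambda>i. E'$i$p i" 0, OF d]
      by simp
  qed
  show ?thesis
    unfolding det_def Phi_def
    by (intro DERIV_sum DERIV_cmult pr)
qed

lemma Phi_deriv:
  fixes M E E' :: "real^'k::finite^'k"
  shows "(Phi M E E' has_real_derivative Psi M E E') (at 0)"
proof -
  have pr: "((\<lambda>t. \<Prod>j\<in>UNIV-{i}. M$j$p j + t * E$j$p j) has_real_derivative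
      (\<Sum>j\<in>UNIV-{i}. E$j$p j * (\<Prod>k\<in>UNIV-{i}-{j}. M$k$p k))) (at 0)" for p :: "'k \<Rightarrow> 'k" and i
  proof -
    have d: "((\<lambda>t. M$j$p j + t * E$j$p j) has_real_derivative E$j$p j) (at 0)" for j
      by (auto intro!: derivative_eq_intros)
    show ?thesis
      using has_field_derivative_prod[of "UNIV-{i}" "\<lambda>j t. M$j$p j + t * E$j$p j" "\<lambda>j. E$j$p j" 0, OF d]
      by simp
  qed
  show ?thesis
    unfolding Phi_def[abs_def] Psi_def
    by (intro DERIV_sum DERIV_cmult pr)
qed


lemma perm_fix_all_but_one:
  assumes "p permutes (UNIV::'k set)" "\<forall>j. j \<noteq> i \<longrightarrow> p j = j"
  shows "p = id"
proof
  fix x show "p x = id x"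
  proof (cases "x = i")
    case True
    show ?thesis
    proof (rule ccontr)
      assume "p x \<noteq> id x"
      then have "p (p i) = p i" using assms(2) True by auto
      then have "p i = i" using permutes_inj[OF assms(1)] by (auto dest: injD)
      then show False using \<open>p x \<noteq> id x\<close> True by simp
    qed
  qed (use assms in auto)
qed

lemma perm_fix_all_but_two:
  assumes "p permutes (UNIV::'k set)" "i \<noteq> j" "\<forall>k. k \<noteq> i \<and> k \<noteq> j \<longrightarrow> p k = k"
  shows "p = id \<or> p = Transposition.transpose i j"
proof -
  have inj: "inj p" using permutes_inj[OF assms(1)] .
  have pi: "p i = i \<or> p i = j"
  proof (rule ccontr)
    assume "\<not> (p i = i \<or> p i = j)"
    then have "p (p i) = p i" using assms(3) by auto
    then have "p i = i" using inj by (auto dest: injD)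
    then show False using \<open>\<not> (p i = i \<or> p i = j)\<close> by simp
  qed
  have pj: "p j = i \<or> p j = j"
  proof (rule ccontr)
    assume "\<not> (p j = i \<or> p j = j)"
    then have "p (p j) = p j" using assms(3) by auto
    then have "p j = j" using inj by (auto dest: injD)
    then show False using \<open>\<not> (p j = i \<or> p j = j)\<close> by simp
  qed
  have ne: "p i \<noteq> p j" using inj assms(2) by (auto dest: injD)
  show ?thesis
  proof (cases "p i = i")
    case True
    then have "p j = j" using pj ne by auto
    have "p = id"
    proof (rule ext)
      fix x show "p x = id x" using True \<open>p j = j\<close> assms(3) by (cases "x = i"; cases "x = j") auto
    qed
    then show ?thesis by simp
  next
    case False
    then have "p i = j" "p j = i" using pi pj ne by auto
    have "p = Transposition.transpose i j"
    proof (rule ext)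
      fix x show "p x = Transposition.transpose i j x" using \<open>p i = j\<close> \<open>p j = i\<close> assms(3)
        by (cases "x = i"; cases "x = j") (auto simp: Transposition.transpose_def)
    qed
    then show ?thesis by simp
  qed
qed

lemma sum_perm_single:
  assumes "\<And>p. p permutes (UNIV::'k::finite set) \<Longrightarrow> p \<noteq> id \<Longrightarrow> g p = (0::real)"
  shows "(\<Sum>p | p permutes (UNIV::'k set). g p) = g id"
proof -
  have "(\<Sum>p | p permutes (UNIV::'k set). g p) = (\<Sum>p\<in>{id}. g p)"
    by (rule sum.mono_neutral_right) (auto simp: finite_permutations assms)
  then show ?thesis by simp
qed

lemma sum_perm_two:
  assumes "i \<noteq> j" "\<And>p. p permutes (UNIV::'k::finite set) \<Longrightarrow> p \<noteq> id \<Longrightarrow> p \<noteq> Transposition.transpose i j \<Longrightarrow> g p = (0::real)"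
  shows "(\<Sum>p | p permutes (UNIV::'k set). g p) = g id + g (Transposition.transpose i j)"
proof -
  have ne: "id \<noteq> Transposition.transpose i j"
  proof
    assume "id = Transposition.transpose i j"
    then have "id i = Transposition.transpose i j i" by simp
    then show False using assms(1) by simp
  qed
  have "(\<Sum>p | p permutes (UNIV::'k set). g p) = (\<Sum>p\<in>{id, Transposition.transpose i j}. g p)"
    by (rule sum.mono_neutral_right) (auto simp: finite_permutations assms permutes_swap_id)
  then show ?thesis using ne by simp
qed

lemma Phi_I: "Phi (mat 1) K K' 0 = trace (K' :: real^'k::finite^'k)"
proof -
  have "Phi (mat 1) K K' 0 = (\<Sum>i\<in>UNIV. \<Sum>p | p permutes (UNIV::'k set). of_int (sign p) *
      (K'$i$p i * (\<Prod>j\<in>UNIV-{i}. (mat 1 :: real^'k^'k)$j$p j)))"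
    unfolding Phi_def by (simp add: sum_distrib_left) (rule sum.swap)
  also have "\<dots> = (\<Sum>i\<in>UNIV. K'$i$i)"
  proof (rule sum.cong[OF refl])
    fix i
    show "(\<Sum>p | p permutes (UNIV::'k set). of_int (sign p) *
      (K'$i$p i * (\<Prod>j\<in>UNIV-{i}. (mat 1 :: real^'k^'k)$j$p j))) = K'$i$i"
    proof (subst sum_perm_single)
      fix p :: "'k \<Rightarrow> 'k" assume p: "p permutes UNIV" "p \<noteq> id"
      have "\<not> (\<forall>j. j \<noteq> i \<longrightarrow> p j = j)"
      proof
        assume "\<forall>j. j \<noteq> i \<longrightarrow> p j = j"
        then have "p = id" by (rule perm_fix_all_but_one[OF p(1)])
        with p(2) show False by simp
      qed
      then obtain j where "j \<noteq> i" "p j \<noteq> j" by blast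
      then have "(\<Prod>j\<in>UNIV-{i}. (mat 1 :: real^'k^'k)$j$p j) = 0"
        by (intro prod_zero bexI[of _ j]) (auto simp: mat_def)
      then show "of_int (sign p) * (K'$i$p i * (\<Prod>j\<in>UNIV-{i}. (mat 1 :: real^'k^'k)$j$p j)) = 0" by simp
    qed (simp add: mat_def)
  qed
  finally show ?thesis by (simp add: trace_def)
qed


lemma Psi_I: "Psi (mat 1) K K' = trace K * trace K' - trace (K ** (K' :: real^'k::finite^'k))"
proof -
  define h where "h i j = K'$i$i * K$j$j - K'$i$j * K$j$i" for i j
  have "Psi (mat 1) K K' = (\<Sum>i\<in>UNIV. \<Sum>j\<in>UNIV-{i}. \<Sum>p | p permutes (UNIV::'k set). of_int (sign p) *
      (K'$i$p i * (K$j$p j * (\<Prod>k\<in>UNIV-{i}-{j}. (mat 1 :: real^'k^'k)$k$p k))))"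
  proof -
    have "Psi (mat 1) K K' = (\<Sum>p | p permutes (UNIV::'k set). \<Sum>i\<in>UNIV. \<Sum>j\<in>UNIV-{i}. of_int (sign p) *
      (K'$i$p i * (K$j$p j * (\<Prod>k\<in>UNIV-{i}-{j}. (mat 1 :: real^'k^'k)$k$p k))))"
      unfolding Psi_def by (simp add: sum_distrib_left)
    also have "\<dots> = (\<Sum>i\<in>UNIV. \<Sum>p | p permutes (UNIV::'k set). \<Sum>j\<in>UNIV-{i}. of_int (sign p) *
      (K'$i$p i * (K$j$p j * (\<Prod>k\<in>UNIV-{i}-{j}. (mat 1 :: real^'k^'k)$k$p k))))"
      by (rule sum.swap)
    also have "\<dots> = (\<Sum>i\<in>UNIV. \<Sum>j\<in>UNIV-{i}. \<Sum>p | p permutes (UNIV::'k set). of_int (sign p) *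
      (K'$i$p i * (K$j$p j * (\<Prod>k\<in>UNIV-{i}-{j}. (mat 1 :: real^'k^'k)$k$p k))))"
      by (rule sum.cong[OF refl], rule sum.swap)
    finally show ?thesis .
  qed
  also have "\<dots> = (\<Sum>i\<in>UNIV. \<Sum>j\<in>UNIV-{i}. h i j)"
  proof (intro sum.cong refl)
    fix i j :: 'k assume "j \<in> UNIV - {i}"
    then have ij: "i \<noteq> j" by auto
    show "(\<Sum>p | p permutes (UNIV::'k set). of_int (sign p) *
      (K'$i$p i * (K$j$p j * (\<Prod>k\<in>UNIV-{i}-{j}. (mat 1 :: real^'k^'k)$k$p k)))) = h i j"
    proof (subst sum_perm_two[OF ij])
      fix p :: "'k \<Rightarrow> 'k" assume p: "p permutes UNIV" "p \<noteq> id" "p \<noteq> Transposition.transpose i j"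
      have "\<not> (\<forall>k. k \<noteq> i \<and> k \<noteq> j \<longrightarrow> p k = k)"
      proof
        assume "\<forall>k. k \<noteq> i \<and> k \<noteq> j \<longrightarrow> p k = k"
        then have "p = id \<or> p = Transposition.transpose i j" by (rule perm_fix_all_but_two[OF p(1) ij])
        with p(2,3) show False by simp
      qed
      then obtain k where "k \<noteq> i" "k \<noteq> j" "p k \<noteq> k" by blast
      then have "(\<Prod>k\<in>UNIV-{i}-{j}. (mat 1 :: real^'k^'k)$k$p k) = 0"
        by (intro prod_zero bexI[of _ k]) (auto simp: mat_def)
      then show "of_int (sign p) * (K'$i$p i * (K$j$p j * (\<Prod>k\<in>UNIV-{i}-{j}. (mat 1 :: real^'k^'k)$k$p k))) = 0"
        by simp
    next
      have 1: "(\<Prod>k\<in>UNIV-{i}-{j}. (mat 1 :: real^'k^'k)$k$id k) = 1" by (simp add: mat_def)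
      have 2: "(\<Prod>k\<in>UNIV-{i}-{j}. (mat 1 :: real^'k^'k)$k$Transposition.transpose i j k) = 1"
        by (rule prod.neutral) (auto simp: mat_def)
      show "of_int (sign (id::'k\<Rightarrow>'k)) * (K'$i$id i * (K$j$id j * (\<Prod>k\<in>UNIV-{i}-{j}. (mat 1 :: real^'k^'k)$k$id k)))
          + of_int (sign (Transposition.transpose i j)) * (K'$i$Transposition.transpose i j i * (K$j$Transposition.transpose i j j *
             (\<Prod>k\<in>UNIV-{i}-{j}. (mat 1 :: real^'k^'k)$k$Transposition.transpose i j k))) = h i j"
        unfolding 1 2 using ij by (simp add: sign_swap_id h_def)
    qed
  qed
  also have "\<dots> = (\<Sum>i\<in>UNIV. \<Sum>j\<in>UNIV. h i j)"
    by (rule sum.cong[OF refl]) (simp add: sum_diff1 h_def)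
  also have "\<dots> = trace K' * trace K - trace (K' ** K)"
    by (simp add: h_def trace_def matrix_matrix_mult_def sum_subtractf sum_distrib_left sum_distrib_right mult.commute)
  finally show ?thesis by (simp add: trace_mul_sym[of K K'] mult.commute)
qed


lemma mm_scale: "(A::real^'k::finite^'k) ** (k *\<^sub>R B) = k *\<^sub>R (A ** B)"
  by (simp add: matrix_matrix_mult_def vec_eq_iff sum_distrib_left mult_ac)

lemma det_fact:
  fixes Q U E E' :: "real^'k::finite^'k"
  assumes "Q ** U = mat 1"
  shows "det (Q + t *\<^sub>R E + u *\<^sub>R E') = det Q * det (mat 1 + t *\<^sub>R (U ** E) + u *\<^sub>R (U ** E'))"
proof -
  have "Q ** (mat 1 + t *\<^sub>R (U ** E) + u *\<^sub>R (U ** E')) = Q + t *\<^sub>R E + u *\<^sub>R E'"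
    by (simp add: matrix_add_ldistrib mm_scale matrix_mul_assoc assms)
  then show ?thesis by (metis det_mul)
qed

lemma Phi_fact:
  fixes Q U E E' :: "real^'k::finite^'k"
  assumes "Q ** U = mat 1"
  shows "Phi Q E E' t = det Q * Phi (mat 1) (U ** E) (U ** E') t"
proof -
  have "((\<lambda>u. det Q * det (mat 1 + t *\<^sub>R (U ** E) + u *\<^sub>R (U ** E'))) has_real_derivative
      det Q * Phi (mat 1) (U ** E) (U ** E') t) (at 0)"
    by (intro DERIV_cmult det_slice_deriv)
  then have "((\<lambda>u. det (Q + t *\<^sub>R E + u *\<^sub>R E')) has_real_derivative
      det Q * Phi (mat 1) (U ** E) (U ** E') t) (at 0)"
    by (simp add: det_fact[OF assms])
  then show ?thesis using det_slice_deriv DERIV_unique by blast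
qed

lemma Psi_fact:
  fixes Q U E E' :: "real^'k::finite^'k"
  assumes "Q ** U = mat 1"
  shows "Psi Q E E' = det Q * Psi (mat 1) (U ** E) (U ** E')"
proof -
  have "((\<lambda>t. det Q * Phi (mat 1) (U ** E) (U ** E') t) has_real_derivative
      det Q * Psi (mat 1) (U ** E) (U ** E')) (at 0)"
    by (intro DERIV_cmult Phi_deriv)
  moreover have "Phi Q E E' = (\<lambda>t. det Q * Phi (mat 1) (U ** E) (U ** E') t)"
    by (rule ext) (rule Phi_fact[OF assms])
  ultimately have "(Phi Q E E' has_real_derivative det Q * Psi (mat 1) (U ** E) (U ** E')) (at 0)"
    by simp
  then show ?thesis using Phi_deriv DERIV_unique by blast
qed

lemma deriv_slice1:
  fixes Q U E' :: "real^'k::finite^'k"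
  assumes "Q ** U = mat 1"
  shows "((\<lambda>u. det (Q + u *\<^sub>R E')) has_real_derivative det Q * trace (U ** E')) (at 0)"
proof -
  have "((\<lambda>u. det (Q + 0 *\<^sub>R E' + u *\<^sub>R E')) has_real_derivative Phi Q E' E' 0) (at 0)"
    by (rule det_slice_deriv)
  then show ?thesis by (simp add: Phi_fact[OF assms] Phi_I)
qed

lemma deriv_inner_eq:
  fixes Q E E' :: "real^'k::finite^'k"
  shows "deriv (\<lambda>u. det (Q + t *\<^sub>R E + u *\<^sub>R E')) 0 = Phi Q E E' t"
  by (rule DERIV_imp_deriv[OF det_slice_deriv])

lemma deriv_slice2:
  fixes Q U E E' :: "real^'k::finite^'k"
  assumes "Q ** U = mat 1"
  shows "deriv (\<lambda>t. deriv (\<lambda>u. det (Q + t *\<^sub>R E + u *\<^sub>R E')) 0) 0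
    = det Q * (trace (U ** E) * trace (U ** E') - trace ((U ** E) ** (U ** E')))"
  unfolding deriv_inner_eq
  using DERIV_imp_deriv[OF Phi_deriv[of Q E E']]
  by (simp add: Psi_fact[OF assms] Psi_I)


abbreviation Ecl where "Ecl s C i j \<equiv> cl_block_matrix s (coord C i j)"

lemma coord_entry: "coord C i j $ C' $ k $ l = (if C' = C \<and> k = i \<and> l = j then 1 else 0)"
  by (simp add: coord_def)

lemma symd_eq_iff: "symd B A = C \<longleftrightarrow> B = symd C A"
  by (auto simp: symd_def)

lemma card_sets: "card (UNIV :: 'e::finite set set) = 2 ^ CARD('e)"
  using card_Pow[of "UNIV::'e set"] by (simp add: Pow_UNIV)

lemma clsym_swap: "clsym_coeffs s V \<Longrightarrow> V$C$j$i = clsgn s C C * V$C$i$j"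
proof -
  assume "clsym_coeffs s V"
  then have "transpose (V $ C) $ i $ j = (clsgn s C C *\<^sub>R V $ C) $ i $ j"
    unfolding clsym_coeffs_def by simp
  then show ?thesis by (simp add: transpose_def)
qed

lemma ME: "(M ** Ecl s C i j) $ x $ (B0,l) = (if l = j then clsgn s C B0 * M $ x $ (symd C B0, i) else 0)"
proof -
  have "(M ** Ecl s C i j) $ x $ (B0,l) = (\<Sum>B\<in>UNIV. \<Sum>r\<in>UNIV. M$x$(B,r) * (Ecl s C i j $ (B,r) $ (B0,l)))"
    by (simp add: matrix_matrix_mult_def sum_pair_UNIV)
  also have "\<dots> = (\<Sum>B\<in>UNIV. if B = symd C B0 \<and> l = j then clsgn s C B0 * M $ x $ (symd C B0, i) else 0)"
  proof (rule sum.cong[OF refl])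
    fix B
    show "(\<Sum>r\<in>UNIV. M$x$(B,r) * (Ecl s C i j $ (B,r) $ (B0,l))) =
       (if B = symd C B0 \<and> l = j then clsgn s C B0 * M $ x $ (symd C B0, i) else 0)"
    proof (cases "B = symd C B0 \<and> l = j")
      case True
      then have "(\<Sum>r\<in>UNIV. M$x$(B,r) * (Ecl s C i j $ (B,r) $ (B0,l))) =
         (\<Sum>r\<in>UNIV. if r = i then clsgn s C B0 * M $ x $ (symd C B0, i) else 0)"
        by (intro sum.cong refl) (auto simp: blk_entry coord_entry)
      then show ?thesis using True by simp
    next
      case False
      then have "symd B B0 \<noteq> C \<or> l \<noteq> j" by (auto simp: symd_eq_iff)
      then show ?thesis
      proof (elim disjE)
        assume "symd B B0 \<noteq> C" then show ?thesis using False by (simp add: blk_entry coord_entry, blast)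
      next
        assume "l \<noteq> j" then show ?thesis using False by (simp add: blk_entry coord_entry)
      qed
    qed
  qed
  also have "\<dots> = (if l = j then clsgn s C B0 * M $ x $ (symd C B0, i) else 0)"
    by (cases "l = j") simp_all
  finally show ?thesis .
qed


lemma trace_pair: "trace (M :: real^('a::finite \<times> 'b::finite)^('a \<times> 'b)) = (\<Sum>A\<in>UNIV. \<Sum>k\<in>UNIV. M $ (A,k) $ (A,k))"
  by (simp add: trace_def sum_pair_UNIV)

lemma trace_mm_pair: "trace ((M :: real^('a::finite \<times> 'b::finite)^('a \<times> 'b)) ** N) =
    (\<Sum>A\<in>UNIV. \<Sum>k\<in>UNIV. \<Sum>B\<in>UNIV. \<Sum>l\<in>UNIV. M $ (A,k) $ (B,l) * N $ (B,l) $ (A,k))"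
  by (simp add: trace_def sum_pair_UNIV matrix_matrix_mult_def)

lemma symd_cancel1[simp]: "symd B0 (symd C B0) = C" "symd A (symd A B) = B" by (auto simp: symd_def)

context fixes s :: "'e::{finite,linorder} \<Rightarrow> 'e \<Rightarrow> real" assumes sok: "sign_ok s"
begin

lemma clsgn_sq2: "clsgn s A B * (clsgn s A B * x) = x"
  by (simp add: mult.assoc[symmetric] clsgn_sq[OF sok])

lemmas cls2 = clsgn_symd_left[OF sok] clsgn_symd_right[OF sok] clsgn_sq[OF sok] clsgn_sq2

lemma tr_UE:
  fixes V :: "real^'n::finite^'n^'e set"
  assumes "clsym_coeffs s V"
  shows "trace (cl_block_matrix s V ** Ecl s C i j) = 2 ^ CARD('e) * V$C$i$j"
proof -
  have "trace (cl_block_matrix s V ** Ecl s C i j) = (\<Sum>B0\<in>UNIV. \<Sum>l\<in>UNIV.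
     (if l = j then clsgn s C B0 * cl_block_matrix s V $ (B0,l) $ (symd C B0, i) else 0))"
    by (simp add: trace_pair ME)
  also have "\<dots> = (\<Sum>B0\<in>(UNIV::'e set set). V$C$i$j)"
  proof (rule sum.cong[OF refl])
    fix B0
    have "clsgn s C B0 * cl_block_matrix s V $ (B0,j) $ (symd C B0, i)
        = clsgn s C B0 * clsgn s C (symd C B0) * (clsgn s C C * V$C$i$j)"
      by (simp add: blk_entry clsym_swap[OF assms, of C j i])
    also have "\<dots> = V$C$i$j" by (simp add: cls2 mult_ac)
    finally show "(\<Sum>l\<in>UNIV. (if l = j then clsgn s C B0 * cl_block_matrix s V $ (B0,l) $ (symd C B0, i) else 0))
      = V$C$i$j" by simp
  qed
  also have "\<dots> = 2 ^ CARD('e) * V$C$i$j" by (simp add: card_sets)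
  finally show ?thesis .
qed


lemma tr_BB:
  fixes V W :: "real^'n::finite^'n^'e set"
  assumes "clsym_coeffs s W"
  shows "trace (cl_block_matrix s V ** cl_block_matrix s W) = 2 ^ CARD('e) * (\<Sum>C\<in>UNIV. \<Sum>k\<in>UNIV. \<Sum>l\<in>UNIV. V$C$k$l * W$C$k$l)"
proof -
  have "trace (cl_block_matrix s V ** cl_block_matrix s W) = (\<Sum>A\<in>UNIV. \<Sum>B\<in>UNIV. \<Sum>k\<in>UNIV. \<Sum>l\<in>UNIV.
      cl_block_matrix s V $ (A,k) $ (B,l) * cl_block_matrix s W $ (B,l) $ (A,k))"
    unfolding trace_mm_pair by (rule sum.cong[OF refl], rule sum.swap)
  also have "\<dots> = (\<Sum>A\<in>UNIV. \<Sum>C\<in>UNIV. \<Sum>k\<in>UNIV. \<Sum>l\<in>UNIV.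
      cl_block_matrix s V $ (A,k) $ (symd A C,l) * cl_block_matrix s W $ (symd A C,l) $ (A,k))"
    apply (rule sum.cong[OF refl])
    subgoal for A by (rule sum.reindex_bij_witness[of _ "symd A" "symd A"]) simp_all
    done
  also have "\<dots> = (\<Sum>A\<in>(UNIV::'e set set). \<Sum>C\<in>UNIV. \<Sum>k\<in>UNIV. \<Sum>l\<in>UNIV. V$C$k$l * W$C$k$l)"
  proof (intro sum.cong refl)
    fix A C :: "'e set" and k l :: 'n
    have e: "symd (symd A C) A = C" by (auto simp: symd_def)
    have "cl_block_matrix s V $ (A,k) $ (symd A C,l) * cl_block_matrix s W $ (symd A C,l) $ (A,k)
       = (clsgn s C (symd A C) * clsgn s C A * clsgn s C C) * (V$C$k$l * W$C$k$l)"
      by (simp add: blk_entry e clsym_swap[OF assms, of C l k] mult_ac)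
    also have "clsgn s C (symd A C) * clsgn s C A * clsgn s C C = 1" by (simp add: cls2 mult_ac)
    finally show "cl_block_matrix s V $ (A,k) $ (symd A C,l) * cl_block_matrix s W $ (symd A C,l) $ (A,k)
       = V$C$k$l * W$C$k$l" by simp
  qed
  also have "\<dots> = 2 ^ CARD('e) * (\<Sum>C\<in>UNIV. \<Sum>k\<in>UNIV. \<Sum>l\<in>UNIV. V$C$k$l * W$C$k$l)"
    by (simp add: card_sets)
  finally show ?thesis .
qed

end

lemma sum_if_left: "(\<Sum>x\<in>UNIV. (if x = (a::'a::finite) then f x else 0) * g x) = f a * (g a :: real)"
proof -
  have "(if x = a then f x else 0) * g x = (if x = a then f x * g x else 0)" for x by simp
  then show ?thesis by simp
qed

lemma sum_if_right: "(\<Sum>x\<in>UNIV. g x * (if x = (a::'a::finite) then f x else 0)) = g a * (f a :: real)"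
proof -
  have "g x * (if x = a then f x else 0) = (if x = a then g x * f x else 0)" for x by simp
  then show ?thesis by simp
qed

lemma swap_in: "(\<Sum>x\<in>X. \<Sum>a\<in>A. \<Sum>b\<in>B. f x a b) = (\<Sum>a\<in>A. \<Sum>b\<in>B. \<Sum>x\<in>X. (f x a b :: real))"
proof -
  have "(\<Sum>x\<in>X. \<Sum>a\<in>A. \<Sum>b\<in>B. f x a b) = (\<Sum>a\<in>A. \<Sum>x\<in>X. \<Sum>b\<in>B. f x a b)" by (rule sum.swap)
  also have "\<dots> = (\<Sum>a\<in>A. \<Sum>b\<in>B. \<Sum>x\<in>X. f x a b)" by (rule sum.cong[OF refl], rule sum.swap)
  finally show ?thesis .
qed

lemma swap_out2: "(\<Sum>i\<in>I. \<Sum>j\<in>J. \<Sum>k\<in>K. \<Sum>l\<in>L. \<Sum>a\<in>A. \<Sum>b\<in>B. f i j k l a b)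
   = (\<Sum>a\<in>A. \<Sum>b\<in>B. \<Sum>i\<in>I. \<Sum>j\<in>J. \<Sum>k\<in>K. \<Sum>l\<in>L. (f i j k l a b :: real))"
proof -
  have "(\<Sum>i\<in>I. \<Sum>j\<in>J. \<Sum>k\<in>K. \<Sum>l\<in>L. \<Sum>a\<in>A. \<Sum>b\<in>B. f i j k l a b)
      = (\<Sum>i\<in>I. \<Sum>j\<in>J. \<Sum>k\<in>K. \<Sum>a\<in>A. \<Sum>b\<in>B. \<Sum>l\<in>L. f i j k l a b)"
    by (intro sum.cong refl swap_in)
  also have "\<dots> = (\<Sum>i\<in>I. \<Sum>j\<in>J. \<Sum>a\<in>A. \<Sum>b\<in>B. \<Sum>k\<in>K. \<Sum>l\<in>L. f i j k l a b)"
    by (intro sum.cong refl swap_in)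
  also have "\<dots> = (\<Sum>i\<in>I. \<Sum>a\<in>A. \<Sum>b\<in>B. \<Sum>j\<in>J. \<Sum>k\<in>K. \<Sum>l\<in>L. f i j k l a b)"
    by (intro sum.cong refl swap_in)
  also have "\<dots> = (\<Sum>a\<in>A. \<Sum>b\<in>B. \<Sum>i\<in>I. \<Sum>j\<in>J. \<Sum>k\<in>K. \<Sum>l\<in>L. f i j k l a b)"
    by (rule swap_in)
  finally show ?thesis .
qed

lemma if01_mult: "(if P then 1 else 0) * x = (if P then x else (0::real))" by simp

lemma delta2a: "(\<Sum>k\<in>UNIV. \<Sum>l\<in>UNIV. (if (i::'a::finite) = k \<and> (j::'b::finite) = l then 1 else 0) * F k l) = (F i j :: real)"
proof -
  have "(\<Sum>l\<in>UNIV. (if i = k \<and> j = l then 1 else 0) * F k l) = (if k = i then F i j else 0)" for k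
    by (cases "k = i") (simp_all add: if01_mult)
  then show ?thesis by simp
qed

lemma delta2b: "(\<Sum>k\<in>UNIV. \<Sum>l\<in>UNIV. (if (i::'a::finite) = l \<and> (j::'a) = k then 1 else 0) * F k l) = (F j i :: real)"
proof -
  have "(\<Sum>l\<in>UNIV. (if i = l \<and> j = k then 1 else 0) * F k l) = (if k = j then F j i else 0)" for k
    by (cases "k = j") (simp_all add: if01_mult)
  then show ?thesis by simp
qed

lemma gam_expand: fixes i j :: "'n::finite" shows "(\<Sum>k\<in>UNIV. \<Sum>l\<in>UNIV. gam_coord s C i j k l * F k l) = (F i j + clsgn s C C * F j i) / (2::real)"
proof -
  have "gam_coord s C i j k l * F k l = ((if i = k \<and> j = l then 1 else 0) * F k l) / 2 +
     clsgn s C C * ((if i = l \<and> j = k then 1 else 0) * F k l) / 2" for k l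
    unfolding gam_coord_def by (simp add: field_simps)
  then have "(\<Sum>k\<in>UNIV. \<Sum>l\<in>UNIV. gam_coord s C i j k l * F k l) =
     (\<Sum>k\<in>UNIV. \<Sum>l\<in>UNIV. (if i = k \<and> j = l then 1 else 0) * F k l) / 2 +
     clsgn s C C * (\<Sum>k\<in>UNIV. \<Sum>l\<in>UNIV. (if i = l \<and> j = k then 1 else 0) * F k l) / 2"
    by (simp add: sum.distrib sum_divide_distrib sum_distrib_left)
  then show ?thesis by (simp only: delta2a delta2b add_divide_distrib)
qed


lemma tr_UEUE:
  fixes M :: "real^('e::finite set \<times> 'n::finite)^('e set \<times> 'n)"
  shows "trace ((M ** Ecl s C i j) ** (M ** Ecl s C k l)) =
    (\<Sum>A\<in>UNIV. \<Sum>B\<in>UNIV. clsgn s C B * clsgn s C A * (M$(A,l)$(symd C B,i) * M$(B,j)$(symd C A,k)))"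
proof -
  have "trace ((M ** Ecl s C i j) ** (M ** Ecl s C k l)) =
    (\<Sum>A\<in>UNIV. \<Sum>k'\<in>UNIV. \<Sum>B\<in>UNIV. \<Sum>l'\<in>UNIV.
       (if l' = j then clsgn s C B * M$(A,k')$(symd C B,i) else 0) *
       (M ** Ecl s C k l) $ (B,l') $ (A,k'))"
    unfolding trace_mm_pair ME ..
  also have "\<dots> = (\<Sum>A\<in>UNIV. \<Sum>k'\<in>UNIV. \<Sum>B\<in>UNIV.
       clsgn s C B * M$(A,k')$(symd C B,i) *
       (if k' = l then clsgn s C A * M$(B,j)$(symd C A,k) else 0))"
    by (simp only: sum_if_left ME)
  also have "\<dots> = (\<Sum>A\<in>UNIV. \<Sum>B\<in>UNIV. \<Sum>k'\<in>UNIV.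
       clsgn s C B * M$(A,k')$(symd C B,i) *
       (if k' = l then clsgn s C A * M$(B,j)$(symd C A,k) else 0))"
    by (rule sum.cong[OF refl], rule sum.swap)
  also have "\<dots> = (\<Sum>A\<in>UNIV. \<Sum>B\<in>UNIV. clsgn s C B * clsgn s C A * (M$(A,l)$(symd C B,i) * M$(B,j)$(symd C A,k)))"
    by (simp only: sum_if_right) (simp add: mult_ac)
  finally show ?thesis .
qed


context fixes s :: "'e::{finite,linorder} \<Rightarrow> 'e \<Rightarrow> real" assumes sok: "sign_ok s"
begin

lemmas cls3 = clsgn_symd_left[OF sok] clsgn_symd_right[OF sok] clsgn_sq[OF sok] clsgn_sq2[OF sok]

lemma sg_reduce:
  "clsgn s C B * clsgn s C A * (clsgn s (symd A (symd C B)) (symd C B) * clsgn s (symd A (symd C B)) (symd C A))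
   = clsgn s C C * clsgn s C (symd A (symd C B)) * clsgn s (symd A (symd C B)) (symd A (symd C B)) * clsgn s (symd A (symd C B)) C"
  by (simp add: cls3 mult_ac)

lemma sgD_sum: "(\<Sum>C\<in>UNIV. clsgn s C C * clsgn s C D * clsgn s D D * clsgn s D C) = (\<Sum>A\<in>UNIV. clsgn s A A)"
proof -
  have "(\<Sum>A\<in>UNIV. clsgn s A A) = (\<Sum>C\<in>UNIV. clsgn s (symd D C) (symd D C))"
    by (rule sum_symd_reindex)
  also have "\<dots> = (\<Sum>C\<in>UNIV. clsgn s C C * clsgn s C D * clsgn s D D * clsgn s D C)"
    by (rule sum.cong[OF refl]) (simp add: cls3 mult_ac)
  finally show ?thesis by simp
qed

lemma L_alg:
  fixes V :: "real^'n::finite^'n^'e set"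
  assumes symV: "clsym_coeffs s V"
  shows "(\<Sum>C\<in>UNIV. \<Sum>i\<in>UNIV. \<Sum>j\<in>UNIV. \<Sum>k\<in>UNIV. \<Sum>l\<in>UNIV. gam_coord s C i j k l *
      trace ((cl_block_matrix s V ** Ecl s C i j) ** (cl_block_matrix s V ** Ecl s C k l)))
   = (1/2) * (\<Sum>A\<in>UNIV. clsgn s A A) * trace (cl_block_matrix s V ** cl_block_matrix s V)
     + 2 ^ (CARD('e) - 1) * (\<Sum>C\<in>UNIV. clsgn s C C * (\<Sum>A\<in>UNIV. clsgn s A C * clsgn s C A) * (trace (V$C))^2)"
proof -
  define M where "M = cl_block_matrix s V"
  define sg where "sg C A B = clsgn s C B * clsgn s C A * (clsgn s (symd A (symd C B)) (symd C B) * clsgn s (symd A (symd C B)) (symd C A))" for C A B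
  define sg' where "sg' C D = clsgn s C C * clsgn s C D * clsgn s D D * clsgn s D C" for C D
  define S where "S D = (\<Sum>i\<in>UNIV. \<Sum>j\<in>UNIV. V$D$j$i * V$D$j$i)" for D
  define T where "T D = (\<Sum>i\<in>UNIV. \<Sum>j\<in>UNIV. V$D$i$i * V$D$j$j)" for D
  define cd where "cd = (2::real) ^ CARD('e)"
  have step1: "trace ((M ** Ecl s C i j) ** (M ** Ecl s C k l)) =
     (\<Sum>A\<in>UNIV. \<Sum>B\<in>UNIV. sg C A B * (V$(symd A (symd C B))$l$i * V$(symd A (symd C B))$j$k))" for C i j k l
  proof -
    have e: "symd B (symd C A) = symd A (symd C B)" for A B :: "'e set" by (auto simp: symd_def)
    show ?thesis unfolding tr_UEUE
      by (rule sum.cong[OF refl])+ (simp add: M_def sg_def blk_entry e mult_ac)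
  qed
  have "(\<Sum>C\<in>UNIV. \<Sum>i\<in>UNIV. \<Sum>j\<in>UNIV. \<Sum>k\<in>UNIV. \<Sum>l\<in>UNIV. gam_coord s C i j k l *
      trace ((M ** Ecl s C i j) ** (M ** Ecl s C k l)))
    = (\<Sum>C\<in>UNIV. \<Sum>i\<in>UNIV. \<Sum>j\<in>UNIV. \<Sum>k\<in>UNIV. \<Sum>l\<in>UNIV. \<Sum>A\<in>UNIV. \<Sum>B\<in>UNIV. gam_coord s C i j k l *
      (sg C A B * (V$(symd A (symd C B))$l$i * V$(symd A (symd C B))$j$k)))"
    by (simp add: step1 sum_distrib_left)
  also have "\<dots> = (\<Sum>C\<in>UNIV. \<Sum>A\<in>UNIV. \<Sum>B\<in>UNIV. \<Sum>i\<in>UNIV. \<Sum>j\<in>UNIV. \<Sum>k\<in>UNIV. \<Sum>l\<in>UNIV. gam_coord s C i j k l *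
      (sg C A B * (V$(symd A (symd C B))$l$i * V$(symd A (symd C B))$j$k)))"
    by (rule sum.cong[OF refl], rule swap_out2)
  also have "\<dots> = (\<Sum>C\<in>UNIV. \<Sum>A\<in>UNIV. \<Sum>B\<in>UNIV. sg C A B * ((S (symd A (symd C B)) + clsgn s C C * T (symd A (symd C B))) / 2))"
  proof (intro sum.cong refl)
    fix C A B :: "'e set"
    define D where "D = symd A (symd C B)"
    have "(\<Sum>i\<in>UNIV. \<Sum>j\<in>UNIV. \<Sum>k\<in>UNIV. \<Sum>l\<in>UNIV. gam_coord s C i j k l *
      (sg C A B * (V$D$l$i * V$D$j$k)))
      = sg C A B * (\<Sum>i\<in>UNIV. \<Sum>j\<in>UNIV. \<Sum>k\<in>UNIV. \<Sum>l\<in>UNIV. gam_coord s C i j k l * (V$D$l$i * V$D$j$k))"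
      by (simp add: sum_distrib_left mult_ac)
    also have "\<dots> = sg C A B * (\<Sum>i\<in>UNIV. \<Sum>j\<in>UNIV. (V$D$j$i * V$D$j$i + clsgn s C C * (V$D$i$i * V$D$j$j)) / 2)"
      by (simp only: gam_expand)
    also have "\<dots> = sg C A B * ((S D + clsgn s C C * T D) / 2)"
      by (simp add: S_def T_def sum.distrib sum_divide_distrib sum_distrib_left add_divide_distrib)
    finally show "(\<Sum>i\<in>UNIV. \<Sum>j\<in>UNIV. \<Sum>k\<in>UNIV. \<Sum>l\<in>UNIV. gam_coord s C i j k l *
      (sg C A B * (V$(symd A (symd C B))$l$i * V$(symd A (symd C B))$j$k)))
      = sg C A B * ((S (symd A (symd C B)) + clsgn s C C * T (symd A (symd C B))) / 2)"
      unfolding D_def .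
  qed
  also have "\<dots> = (\<Sum>C\<in>UNIV. \<Sum>A\<in>(UNIV::'e set set). \<Sum>D\<in>UNIV. sg' C D * ((S D + clsgn s C C * T D) / 2))"
  proof (rule sum.cong[OF refl], rule sum.cong[OF refl])
    fix C A :: "'e set"
    show "(\<Sum>B\<in>UNIV. sg C A B * ((S (symd A (symd C B)) + clsgn s C C * T (symd A (symd C B))) / 2))
      = (\<Sum>D\<in>UNIV. sg' C D * ((S D + clsgn s C C * T D) / 2))"
    proof -
      have e: "symd (symd A C) B = symd A (symd C B)" for B by (auto simp: symd_def)
      have e2: "symd A (symd C (symd A (symd C B))) = B" for B by (auto simp: symd_def)
      show ?thesis
        by (rule sum.reindex_bij_witness[of _ "symd (symd A C)" "symd (symd A C)"])
           (simp_all only: e e2 sg_def sg'_def sg_reduce symd_cancel1 UNIV_I simp_thms)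
    qed
  qed
  also have "\<dots> = cd * (\<Sum>C\<in>UNIV. \<Sum>D\<in>UNIV. sg' C D * ((S D + clsgn s C C * T D) / 2))"
    by (simp add: cd_def card_sets sum_distrib_left)
  also have "\<dots> = cd * (\<Sum>D\<in>UNIV. \<Sum>C\<in>UNIV. sg' C D * ((S D + clsgn s C C * T D) / 2))"
    by (rule arg_cong[where f="\<lambda>x. cd * x"], rule sum.swap)
  also have "\<dots> = cd * (\<Sum>D\<in>UNIV. (S D / 2) * (\<Sum>A\<in>UNIV. clsgn s A A)
       + (T D / 2) * clsgn s D D * (\<Sum>A\<in>UNIV. clsgn s A D * clsgn s D A))"
  proof -
    have "(\<Sum>C\<in>UNIV. sg' C D * ((S D + clsgn s C C * T D) / 2))
        = (S D / 2) * (\<Sum>C\<in>UNIV. clsgn s C C * clsgn s C D * clsgn s D D * clsgn s D C)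
          + (T D / 2) * clsgn s D D * (\<Sum>A\<in>UNIV. clsgn s A D * clsgn s D A)" for D
    proof -
      have "sg' C D * ((S D + clsgn s C C * T D) / 2) =
         (S D / 2) * (clsgn s C C * clsgn s C D * clsgn s D D * clsgn s D C)
          + (T D / 2) * clsgn s D D * (clsgn s C D * clsgn s D C)" for C
        by (simp add: sg'_def algebra_simps cls3 add_divide_distrib)
      then show ?thesis by (simp add: sum.distrib sum_distrib_left add_divide_distrib)
    qed
    then show ?thesis by (simp add: sgD_sum)
  qed
  also have "\<dots> = (1/2) * (\<Sum>A\<in>UNIV. clsgn s A A) * (cd * (\<Sum>D\<in>UNIV. S D))
     + (cd / 2) * (\<Sum>C\<in>UNIV. clsgn s C C * (\<Sum>A\<in>UNIV. clsgn s A C * clsgn s C A) * T C)"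
    by (simp add: sum.distrib sum_distrib_left distrib_left mult_ac sum_divide_distrib, rule sum.swap)
  also have "cd * (\<Sum>D\<in>UNIV. S D) = trace (M ** M)"
  proof -
    have "trace (M ** M) = cd * (\<Sum>C\<in>UNIV. \<Sum>k\<in>UNIV. \<Sum>l\<in>UNIV. V$C$k$l * V$C$k$l)"
      unfolding M_def cd_def by (rule tr_BB[OF sok symV])
    also have "(\<Sum>C\<in>UNIV. \<Sum>k\<in>UNIV. \<Sum>l\<in>UNIV. V$C$k$l * V$C$k$l) = (\<Sum>D\<in>UNIV. S D)"
      unfolding S_def by (rule sum.cong[OF refl], rule sum.swap)
    finally show ?thesis by simp
  qed
  also have "cd / 2 = 2 ^ (CARD('e) - 1)"
  proof -
    have "CARD('e) = Suc (CARD('e) - 1)" using finite_UNIV_card_ge_0[where 'a='e] by simp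
    then have "(2::real) ^ CARD('e) = 2 * 2 ^ (CARD('e) - 1)" by (metis power_Suc)
    then show ?thesis by (simp add: cd_def)
  qed
  finally have fin: "(\<Sum>C\<in>UNIV. \<Sum>i\<in>UNIV. \<Sum>j\<in>UNIV. \<Sum>k\<in>UNIV. \<Sum>l\<in>UNIV. gam_coord s C i j k l *
      trace ((M ** Ecl s C i j) ** (M ** Ecl s C k l))) =
      1 / 2 * (\<Sum>A\<in>UNIV. clsgn s A A) * trace (M ** M) +
      2 ^ (CARD('e) - 1) * (\<Sum>C\<in>UNIV. clsgn s C C * (\<Sum>A\<in>UNIV. clsgn s A C * clsgn s C A) * T C)" .
  have Teq: "T C = (trace (V$C))^2" for C
    by (simp add: T_def trace_def power2_eq_square sum_product)
  show ?thesis using fin by (simp add: M_def Teq)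
qed

end

lemma DERIV_ln_abs:
  assumes "x \<noteq> (0::real)"
  shows "((\<lambda>y. ln \<bar>y\<bar>) has_real_derivative 1 / x) (at x)"
proof (cases "x > 0")
  case True
  have "eventually (\<lambda>y. y \<in> {0<..}) (nhds x)" using True by (intro eventually_nhds_in_open) auto
  then have ev: "eventually (\<lambda>y. ln \<bar>y\<bar> = ln y) (nhds x)" by eventually_elim auto
  show ?thesis using DERIV_ln_divide[OF True] DERIV_cong_ev[OF refl ev refl] by simp
next
  case False
  then have neg: "x < 0" using assms by simp
  have "eventually (\<lambda>y. y \<in> {..<0}) (nhds x)" using neg by (intro eventually_nhds_in_open) auto
  then have ev: "eventually (\<lambda>y. ln \<bar>y\<bar> = ln (- y)) (nhds x)" by eventually_elim auto
  have "((\<lambda>y. ln (- y)) has_real_derivative 1 / (- x) * (- 1)) (at x)"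
    by (rule DERIV_chain2[OF DERIV_ln_divide]) (use neg in \<open>auto intro!: derivative_eq_intros\<close>)
  then show ?thesis using DERIV_cong_ev[OF refl ev refl] by simp
qed

lemma PR:
  fixes \<phi> \<psi> :: "real \<Rightarrow> real \<Rightarrow> real"
  assumes a1: "eventually (\<lambda>t. ((\<phi> t) has_real_derivative d\<phi> t) (at 0)) (nhds 0)"
    and a2: "eventually (\<lambda>t. ((\<psi> t) has_real_derivative d\<psi> t) (at 0)) (nhds 0)"
    and b1: "((\<lambda>t. \<phi> t 0) has_real_derivative \<phi>1) (at 0)"
    and b2: "((\<lambda>t. \<psi> t 0) has_real_derivative \<psi>1) (at 0)"
    and c1: "(d\<phi> has_real_derivative \<phi>2) (at 0)"
    and c2: "(d\<psi> has_real_derivative \<psi>2) (at 0)"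
  shows "((\<lambda>t. deriv (\<lambda>u. \<phi> t u * \<psi> t u) 0) has_real_derivative
           \<phi> 0 0 * \<psi>2 + \<psi> 0 0 * \<phi>2 + \<phi>1 * d\<psi> 0 + \<psi>1 * d\<phi> 0) (at 0)"
proof -
  have ev: "eventually (\<lambda>t. deriv (\<lambda>u. \<phi> t u * \<psi> t u) 0 = d\<phi> t * \<psi> t 0 + d\<psi> t * \<phi> t 0) (nhds 0)"
    using a1 a2
  proof eventually_elim
    case (elim t)
    show ?case by (rule DERIV_imp_deriv) (rule DERIV_mult[OF elim])
  qed
  have "((\<lambda>t. d\<phi> t * \<psi> t 0 + d\<psi> t * \<phi> t 0) has_real_derivative
      (\<phi>2 * \<psi> 0 0 + \<psi>1 * d\<phi> 0) + (\<psi>2 * \<phi> 0 0 + \<phi>1 * d\<psi> 0)) (at 0)"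
    by (intro DERIV_add DERIV_mult c1 c2 b1 b2)
  then have "((\<lambda>t. d\<phi> t * \<psi> t 0 + d\<psi> t * \<phi> t 0) has_real_derivative
       \<phi> 0 0 * \<psi>2 + \<psi> 0 0 * \<phi>2 + \<phi>1 * d\<psi> 0 + \<psi>1 * d\<phi> 0) (at 0)"
    by (simp add: algebra_simps)
  then show ?thesis using DERIV_cong_ev[OF refl ev refl] by simp
qed

definition good :: "(real^'n::finite^'n^('e::finite set) \<Rightarrow> real) \<Rightarrow> real^'n^'n^('e set) \<Rightarrow> bool" where
  "good F m \<longleftrightarrow> (\<forall>C i j k l.
     eventually (\<lambda>t. (\<lambda>u. F (m + t *\<^sub>R coord C i j + u *\<^sub>R coord C k l)) differentiable (at 0)) (nhds 0)
     \<and> (\<lambda>t. F (m + t *\<^sub>R coord C i j)) differentiable (at 0)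
     \<and> (\<lambda>t. pd F C k l (m + t *\<^sub>R coord C i j)) differentiable (at 0))"

lemma pd2_mult:
  assumes gF: "good F m" and gG: "good G m"
  shows "pd (pd (\<lambda>x. F x * G x) C k l) C i j m = F m * pd (pd G C k l) C i j m + G m * pd (pd F C k l) C i j m
     + pd F C i j m * pd G C k l m + pd G C i j m * pd F C k l m"
proof -
  define c1 where "c1 = coord C i j"
  define c2 where "c2 = coord C k l"
  define \<phi> where "\<phi> = (\<lambda>t u. F (m + t *\<^sub>R c1 + u *\<^sub>R c2))"
  define \<psi> where "\<psi> = (\<lambda>t u. G (m + t *\<^sub>R c1 + u *\<^sub>R c2))"
  have pdF: "pd F C k l (m + t *\<^sub>R c1) = deriv (\<phi> t) 0" for t
    by (simp add: pd_def \<phi>_def c2_def)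
  have pdG: "pd G C k l (m + t *\<^sub>R c1) = deriv (\<psi> t) 0" for t
    by (simp add: pd_def \<psi>_def c2_def)
  have a1: "eventually (\<lambda>t. ((\<phi> t) has_real_derivative deriv (\<phi> t) 0) (at 0)) (nhds 0)"
    using gF unfolding good_def
    by (auto simp: \<phi>_def c1_def c2_def DERIV_deriv_iff_real_differentiable[symmetric] elim!: eventually_mono)
  have a2: "eventually (\<lambda>t. ((\<psi> t) has_real_derivative deriv (\<psi> t) 0) (at 0)) (nhds 0)"
    using gG unfolding good_def
    by (auto simp: \<psi>_def c1_def c2_def DERIV_deriv_iff_real_differentiable[symmetric] elim!: eventually_mono)
  have b1: "((\<lambda>t. \<phi> t 0) has_real_derivative pd F C i j m) (at 0)"
    using gF unfolding good_def pd_def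
    by (auto simp: \<phi>_def c1_def DERIV_deriv_iff_real_differentiable[symmetric])
  have b2: "((\<lambda>t. \<psi> t 0) has_real_derivative pd G C i j m) (at 0)"
    using gG unfolding good_def pd_def
    by (auto simp: \<psi>_def c1_def DERIV_deriv_iff_real_differentiable[symmetric])
  have c1': "((\<lambda>t. deriv (\<phi> t) 0) has_real_derivative pd (pd F C k l) C i j m) (at 0)"
  proof -
    have "((\<lambda>t. pd F C k l (m + t *\<^sub>R c1)) has_real_derivative pd (pd F C k l) C i j m) (at 0)"
      using gF unfolding good_def by (auto simp: pd_def[of "pd F C k l"] c1_def DERIV_deriv_iff_real_differentiable[symmetric])
    then show ?thesis by (simp add: pdF)
  qed
  have c2': "((\<lambda>t. deriv (\<psi> t) 0) has_real_derivative pd (pd G C k l) C i j m) (at 0)"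
  proof -
    have "((\<lambda>t. pd G C k l (m + t *\<^sub>R c1)) has_real_derivative pd (pd G C k l) C i j m) (at 0)"
      using gG unfolding good_def by (auto simp: pd_def[of "pd G C k l"] c1_def DERIV_deriv_iff_real_differentiable[symmetric])
    then show ?thesis by (simp add: pdG)
  qed
  have D: "deriv (\<lambda>t. deriv (\<lambda>u. \<phi> t u * \<psi> t u) 0) 0 =
           \<phi> 0 0 * pd (pd G C k l) C i j m + \<psi> 0 0 * pd (pd F C k l) C i j m
           + pd F C i j m * deriv (\<psi> 0) 0 + pd G C i j m * deriv (\<phi> 0) 0"
    by (rule DERIV_imp_deriv[OF PR[OF a1 a2 b1 b2 c1' c2']])
  have e1: "pd (pd (\<lambda>x. F x * G x) C k l) C i j m = deriv (\<lambda>t. deriv (\<lambda>u. \<phi> t u * \<psi> t u) 0) 0"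
    by (simp add: pd_def \<phi>_def \<psi>_def c1_def c2_def)
  have e2: "deriv (\<psi> 0) 0 = pd G C k l m" "deriv (\<phi> 0) 0 = pd F C k l m"
    using pdF[of 0] pdG[of 0] by simp_all
  have e3: "\<phi> 0 0 = F m" "\<psi> 0 0 = G m" by (simp_all add: \<phi>_def \<psi>_def)
  show ?thesis unfolding e1 D e2 e3 ..
qed

lemma GammaCl_good:
  assumes gF: "good F m" and gG: "good G m"
  shows "GammaCl s F G m = (\<Sum>C\<in>UNIV. \<Sum>i\<in>UNIV. \<Sum>j\<in>UNIV. \<Sum>k\<in>UNIV. \<Sum>l\<in>UNIV.
     gam_coord s C i j k l * (pd F C i j m * pd G C k l m + pd G C i j m * pd F C k l m)) / 2"
proof -
  have "LCl s (\<lambda>x. F x * G x) m = F m * LCl s G m + G m * LCl s F m +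
     (\<Sum>C\<in>UNIV. \<Sum>i\<in>UNIV. \<Sum>j\<in>UNIV. \<Sum>k\<in>UNIV. \<Sum>l\<in>UNIV.
     gam_coord s C i j k l * (pd F C i j m * pd G C k l m + pd G C i j m * pd F C k l m))"
    unfolding LCl_def pd2_mult[OF gF gG]
    by (simp add: sum.distrib sum_distrib_left distrib_left mult_ac)
  then show ?thesis unfolding GammaCl_def by simp
qed


lemma ev_nz:
  assumes "(g has_real_derivative D) (at 0)" "g 0 \<noteq> 0"
  shows "eventually (\<lambda>t. g t \<noteq> 0) (nhds 0)"
proof -
  have "(g \<longlongrightarrow> g 0) (at 0)" using DERIV_isCont[OF assms(1)] by (simp add: isCont_def)
  then have "eventually (\<lambda>t. g t \<noteq> 0) (at 0)" using assms(2) by (rule tendsto_imp_eventually_ne)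
  then show ?thesis using assms(2) by (simp add: eventually_nhds_conv_at)
qed

lemma slice_eq: "Pcl s (m + t *\<^sub>R c1 + u *\<^sub>R c2) X =
   det ((cl_block_matrix s m - X *\<^sub>R mat 1) + t *\<^sub>R cl_block_matrix s c1 + u *\<^sub>R cl_block_matrix s c2)"
  by (simp add: Pcl_def blk_add blk_scale algebra_simps)

lemma slice_eq1: "Pcl s (m + t *\<^sub>R c1) X =
   det ((cl_block_matrix s m - X *\<^sub>R mat 1) + 0 *\<^sub>R cl_block_matrix s c1 + t *\<^sub>R cl_block_matrix s c1)"
  by (simp add: Pcl_def blk_add blk_scale algebra_simps)

lemma pd_P_slice: "pd (\<lambda>x. Pcl s x X) C k l (m + t *\<^sub>R c1) =
   Phi (cl_block_matrix s m - X *\<^sub>R mat 1) (cl_block_matrix s c1) (Ecl s C k l) t"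
  unfolding pd_def slice_eq by (rule deriv_inner_eq)

lemma pd_P: "pd (\<lambda>x. Pcl s x X) C k l m =
   Phi (cl_block_matrix s m - X *\<^sub>R mat 1) (Ecl s C k l) (Ecl s C k l) 0"
  using pd_P_slice[of s X C k l m 0 "coord C k l"] by simp

lemma good_P: fixes m :: "real^'n::finite^'n^'e::finite set" shows "good (\<lambda>x. Pcl s x X) m"
  unfolding good_def
proof (intro allI conjI)
  fix C :: "'e set" and i j k l :: 'n
  show "eventually (\<lambda>t. (\<lambda>u. Pcl s (m + t *\<^sub>R coord C i j + u *\<^sub>R coord C k l) X) differentiable (at 0)) (nhds 0)"
    unfolding slice_eq real_differentiable_def using det_slice_deriv by (intro always_eventually allI) blast
  show "(\<lambda>t. Pcl s (m + t *\<^sub>R coord C i j) X) differentiable (at 0)"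
    unfolding slice_eq1 real_differentiable_def using det_slice_deriv by blast
  show "(\<lambda>t. pd (\<lambda>x. Pcl s x X) C k l (m + t *\<^sub>R coord C i j)) differentiable (at 0)"
    unfolding pd_P_slice real_differentiable_def using Phi_deriv by blast
qed

lemma lnslice_deriv:
  assumes "det (Q + t *\<^sub>R E) \<noteq> 0"
  shows "((\<lambda>u. ln \<bar>det (Q + t *\<^sub>R E + u *\<^sub>R E')\<bar>) has_real_derivative Phi Q E E' t / det (Q + t *\<^sub>R E)) (at 0)"
proof -
  have "((\<lambda>u. ln \<bar>det (Q + t *\<^sub>R E + u *\<^sub>R E')\<bar>) has_real_derivative 1 / det (Q + t *\<^sub>R E + 0 *\<^sub>R E') * Phi Q E E' t) (at 0)"
    by (rule DERIV_chain2[OF DERIV_ln_abs det_slice_deriv]) (use assms in simp)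
  then show ?thesis by simp
qed

context
  fixes s :: "'e::{finite,linorder} \<Rightarrow> 'e \<Rightarrow> real" and m :: "real^'n::finite^'n^'e set" and X :: real
  assumes nz: "Pcl s m X \<noteq> 0"
begin

lemma good_lnP: "good (\<lambda>x. ln \<bar>Pcl s x X\<bar>) m"
  unfolding good_def
proof (intro allI conjI)
  fix C :: "'e set" and i j k l :: 'n
  define Q where "Q = cl_block_matrix s m - X *\<^sub>R mat 1"
  define E1 where "E1 = Ecl s C i j"
  define E2 where "E2 = Ecl s C k l"
  have g0: "det (Q + 0 *\<^sub>R E1) \<noteq> 0" using nz by (simp add: Q_def Pcl_def)
  have gd: "((\<lambda>t. det (Q + t *\<^sub>R E1)) has_real_derivative Phi Q 0 E1 0) (at 0)"
    using det_slice_deriv[of Q 0 0 E1] by simp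
  have evnz: "eventually (\<lambda>t. det (Q + t *\<^sub>R E1) \<noteq> 0) (nhds 0)"
    using ev_nz[OF gd] g0 by simp
  show "eventually (\<lambda>t. (\<lambda>u. ln \<bar>Pcl s (m + t *\<^sub>R coord C i j + u *\<^sub>R coord C k l) X\<bar>) differentiable (at 0)) (nhds 0)"
    using evnz
  proof eventually_elim
    case (elim t)
    then show ?case unfolding slice_eq real_differentiable_def
      using lnslice_deriv[OF elim] by (auto simp: Q_def E1_def E2_def)
  qed
  show "(\<lambda>t. ln \<bar>Pcl s (m + t *\<^sub>R coord C i j) X\<bar>) differentiable (at 0)"
  proof -
    have "det (Q + 0 *\<^sub>R E1 + 0 *\<^sub>R E1) \<noteq> 0" using g0 by simp
    then have "((\<lambda>u. ln \<bar>det (Q + 0 *\<^sub>R E1 + u *\<^sub>R E1)\<bar>) has_real_derivative Phi Q E1 E1 0 / det (Q + 0 *\<^sub>R E1)) (at 0)"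
      using lnslice_deriv[of Q 0 E1 E1] by simp
    then show ?thesis unfolding slice_eq1 real_differentiable_def by (auto simp: Q_def E1_def)
  qed
  show "(\<lambda>t. pd (\<lambda>x. ln \<bar>Pcl s x X\<bar>) C k l (m + t *\<^sub>R coord C i j)) differentiable (at 0)"
  proof -
    have ev: "eventually (\<lambda>t. pd (\<lambda>x. ln \<bar>Pcl s x X\<bar>) C k l (m + t *\<^sub>R coord C i j)
        = Phi Q E1 E2 t / det (Q + t *\<^sub>R E1)) (nhds 0)"
      using evnz
    proof eventually_elim
      case (elim t)
      show ?case unfolding pd_def slice_eq
        using DERIV_imp_deriv[OF lnslice_deriv[OF elim, of E2]] by (simp add: Q_def E1_def E2_def)
    qed
    have "((\<lambda>t. Phi Q E1 E2 t / det (Q + t *\<^sub>R E1)) has_real_derivative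
       (Psi Q E1 E2 * det (Q + 0 *\<^sub>R E1) - Phi Q E1 E2 0 * Phi Q 0 E1 0) / (det (Q + 0 *\<^sub>R E1) * det (Q + 0 *\<^sub>R E1))) (at 0)"
      by (rule DERIV_divide[OF Phi_deriv gd g0])
    then show ?thesis
      unfolding real_differentiable_def using DERIV_cong_ev[OF refl ev refl] by blast
  qed
qed

lemma pd_lnP: "pd (\<lambda>x. ln \<bar>Pcl s x X\<bar>) C i j m = pd (\<lambda>x. Pcl s x X) C i j m / Pcl s m X"
proof -
  define Q where "Q = cl_block_matrix s m - X *\<^sub>R mat 1"
  define E1 where "E1 = Ecl s C i j"
  have g0: "det (Q + 0 *\<^sub>R E1) \<noteq> 0" using nz by (simp add: Q_def Pcl_def)
  have "pd (\<lambda>x. ln \<bar>Pcl s x X\<bar>) C i j m = Phi Q E1 E1 0 / det (Q + 0 *\<^sub>R E1)"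
    unfolding pd_def using DERIV_imp_deriv[OF lnslice_deriv[OF g0, of E1]] slice_eq1[of s m 0 _ X]
    by (simp add: Q_def E1_def slice_eq1)
  moreover have "det Q = Pcl s m X" by (simp add: Q_def Pcl_def)
  ultimately show ?thesis by (simp add: pd_P Q_def E1_def)
qed

end

lemma ev_notin_finite:
  assumes "finite S"
  shows "eventually (\<lambda>z. z \<notin> S) (at (y::real))"
proof -
  have "\<forall>s\<in>S. eventually (\<lambda>z. z \<noteq> s) (at y)"
  proof
    fix s assume "s \<in> S"
    show "eventually (\<lambda>z. z \<noteq> s) (at y)"
    proof (cases "s = y")
      case True then show ?thesis by (simp add: eventually_at_filter)
    next
      case False
      have "y \<noteq> s" using False by simp
      then show ?thesis using tendsto_imp_eventually_ne[of "\<lambda>z. z" y "at y" s] by simp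
    qed
  qed
  then have "eventually (\<lambda>z. \<forall>s\<in>S. z \<noteq> s) (at y)" using assms by (intro eventually_ball_finite) auto
  then show ?thesis by (rule eventually_mono) auto
qed

lemma cont_eq_finite:
  fixes f g :: "real \<Rightarrow> real"
  assumes "isCont f y" "isCont g y" "finite S" "\<And>z. z \<notin> S \<Longrightarrow> f z = g z"
  shows "f y = g y"
proof -
  have ev: "eventually (\<lambda>z. f z = g z) (at y)"
    using ev_notin_finite[OF assms(3)] by (rule eventually_mono) (use assms(4) in auto)
  have "(f \<longlongrightarrow> f y) (at y)" using assms(1) by (simp add: isCont_def)
  moreover have "(f \<longlongrightarrow> g y) (at y)"
  proof -
    have "(g \<longlongrightarrow> g y) (at y)" using assms(2) by (simp add: isCont_def)
    moreover have "eventually (\<lambda>z. g z = f z) (at y)" using ev by (rule eventually_mono) simp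
    ultimately show ?thesis by (rule Lim_transform_eventually)
  qed
  ultimately show ?thesis using tendsto_unique[OF trivial_limit_at] by blast
qed

lemma det_poly:
  fixes A :: "real^'k::finite^'k"
  shows "\<exists>p. \<forall>Y. det (A - Y *\<^sub>R mat 1) = poly p Y"
proof -
  define p where "p = (\<Sum>q | q permutes (UNIV::'k set). smult (of_int (sign q))
      (\<Prod>i\<in>UNIV. [:A$i$q i, - (mat 1 :: real^'k^'k)$i$q i:]))"
  have "det (A - Y *\<^sub>R mat 1) = poly p Y" for Y
    unfolding det_def p_def poly_sum by (simp add: poly_prod algebra_simps)
  then show ?thesis by blast
qed

lemma Phi_shift: "Phi (M + t *\<^sub>R E) E E' 0 = Phi M E E' t"
  by (simp add: Phi_def)

lemma mm_neg: "(A :: real^'k::finite^'k) ** (- B) = - (A ** B)"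
  by (simp add: matrix_matrix_mult_def vec_eq_iff sum_negf)

lemma dP:
  "((Pcl s m) has_real_derivative Phi (cl_block_matrix s m - Z *\<^sub>R mat 1) (- mat 1) (- mat 1) 0) (at Z)"
proof -
  have "((\<lambda>x. det ((cl_block_matrix s m - Z *\<^sub>R mat 1) + 0 *\<^sub>R (- mat 1) + x *\<^sub>R (- mat 1)))
     has_real_derivative Phi (cl_block_matrix s m - Z *\<^sub>R mat 1) (- mat 1) (- mat 1) 0) (at 0)"
    by (rule det_slice_deriv)
  moreover have "(\<lambda>x. det ((cl_block_matrix s m - Z *\<^sub>R mat 1) + 0 *\<^sub>R (- mat 1) + x *\<^sub>R (- mat 1)))
      = (\<lambda>x. Pcl s m (x + Z))"
    by (rule ext) (simp add: Pcl_def algebra_simps)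
  ultimately show ?thesis using DERIV_shift[of "Pcl s m" _ 0 Z] by simp
qed

lemma derivP: "deriv (Pcl s m) Z = Phi (cl_block_matrix s m - Z *\<^sub>R mat 1) (- mat 1) (- mat 1) 0"
  by (rule DERIV_imp_deriv[OF dP])

lemma derivP2: "deriv (deriv (Pcl s m)) X = Psi (cl_block_matrix s m - X *\<^sub>R mat 1) (- mat 1) (- mat 1)"
proof -
  have "(\<lambda>x. deriv (Pcl s m) (x + X)) = Phi (cl_block_matrix s m - X *\<^sub>R mat 1) (- mat 1) (- mat 1)"
  proof (rule ext)
    fix x
    have e: "cl_block_matrix s m - (x + X) *\<^sub>R mat 1 = (cl_block_matrix s m - X *\<^sub>R mat 1) + x *\<^sub>R (- mat 1)"
      by (simp add: algebra_simps)
    show "deriv (Pcl s m) (x + X) = Phi (cl_block_matrix s m - X *\<^sub>R mat 1) (- mat 1) (- mat 1) x"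
      unfolding derivP e by (rule Phi_shift)
  qed
  then have "((\<lambda>x. deriv (Pcl s m) (x + X)) has_real_derivative Psi (cl_block_matrix s m - X *\<^sub>R mat 1) (- mat 1) (- mat 1)) (at 0)"
    using Phi_deriv by simp
  then have "(deriv (Pcl s m) has_real_derivative Psi (cl_block_matrix s m - X *\<^sub>R mat 1) (- mat 1) (- mat 1)) (at X)"
    using DERIV_shift[of "deriv (Pcl s m)" _ 0 X] by simp
  then show ?thesis by (rule DERIV_imp_deriv)
qed


lemma mm_sub_l: "(A :: real^'k::finite^'k) ** (B - C) = A ** B - A ** C"
  by (simp add: matrix_matrix_mult_def vec_eq_iff sum_subtractf algebra_simps)
lemma mm_sub_r: "((A :: real^'k::finite^'k) - B) ** C = A ** C - B ** C"
  by (simp add: matrix_matrix_mult_def vec_eq_iff sum_subtractf algebra_simps)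
lemma trace_scale: "trace (k *\<^sub>R (A :: real^'k::finite^'k)) = k * trace A"
  by (simp add: trace_def sum_distrib_left)

lemma resolvent:
  fixes UX UY :: "real^'k::finite^'k"
  assumes "QX ** UX = mat 1" "UX ** QX = mat 1" "QY ** UY = mat 1" "UY ** QY = mat 1"
    and "QY - QX = (X - Y) *\<^sub>R mat 1"
  shows "trace UY - trace UX = (Y - X) * trace (UX ** UY)"
proof -
  have "UX ** (QY - QX) ** UY = UX - UY"
    by (simp add: mm_sub_l mm_sub_r matrix_mul_assoc[symmetric] assms(3)) (simp add: matrix_mul_assoc assms(2))
  moreover have "UX ** (QY - QX) ** UY = (X - Y) *\<^sub>R (UX ** UY)"
    by (simp add: assms(5) mm_scale scalar_matrix_assoc[symmetric])
  ultimately have "UX - UY = (X - Y) *\<^sub>R (UX ** UY)" by simp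
  then have "trace UX - trace UY = (X - Y) * trace (UX ** UY)"
    by (metis trace_sub trace_scale)
  then show ?thesis by (simp add: algebra_simps)
qed

lemma cont_Phi: "isCont (\<lambda>Y. Phi (A - Y *\<^sub>R mat 1) E E' 0) Y0"
  unfolding Phi_def by (simp, intro continuous_intros)

lemma cont_det: "isCont (\<lambda>Y. det ((A::real^'k::finite^'k) - Y *\<^sub>R mat 1)) Y0"
  unfolding det_def by (simp, intro continuous_intros)

context fixes s :: "'e::{finite,linorder} \<Rightarrow> 'e \<Rightarrow> real" assumes sok: "sign_ok s"
begin

lemma G_alg:
  fixes V W :: "real^'n::finite^'n^'e set"
  assumes "clsym_coeffs s W"
  shows "(\<Sum>C\<in>UNIV. \<Sum>i\<in>UNIV. \<Sum>j\<in>UNIV. \<Sum>k\<in>UNIV. \<Sum>l\<in>UNIV. gam_coord s C i j k l * (V$C$i$j * W$C$k$l))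
       = (\<Sum>C\<in>UNIV. \<Sum>i\<in>UNIV. \<Sum>j\<in>UNIV. V$C$i$j * W$C$i$j)"
proof (intro sum.cong refl)
  fix C :: "'e set" and i j :: 'n
  have "(\<Sum>k\<in>UNIV. \<Sum>l\<in>UNIV. gam_coord s C i j k l * (V$C$i$j * W$C$k$l))
     = (V$C$i$j * W$C$i$j + clsgn s C C * (V$C$i$j * W$C$j$i)) / 2"
    by (rule gam_expand)
  also have "\<dots> = V$C$i$j * W$C$i$j"
    by (simp add: clsym_swap[OF assms, of C i j] cls2[OF sok] mult_ac)
  finally show "(\<Sum>k\<in>UNIV. \<Sum>l\<in>UNIV. gam_coord s C i j k l * (V$C$i$j * W$C$k$l)) = V$C$i$j * W$C$i$j" .
qed

end

context fixes s :: "'e::{finite,linorder} \<Rightarrow> 'e \<Rightarrow> real" assumes sok: "sign_ok s"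
begin

lemma inv_facts:
  fixes m :: "real^'n::finite^'n^'e set"
  assumes symm: "clsym_coeffs s m" and dz: "det (cl_block_matrix s m - Z *\<^sub>R mat 1) \<noteq> 0"
  defines "Q \<equiv> cl_block_matrix s m - Z *\<^sub>R mat 1"
  shows "Q ** matrix_inv Q = mat 1" "matrix_inv Q ** Q = mat 1"
    "matrix_inv Q = cl_block_matrix s (colE (matrix_inv Q))" "clsym_coeffs s (colE (matrix_inv Q))"
proof -
  have symW: "clsym_coeffs s (m - Z *\<^sub>R idc)" by (intro clsym_diff clsym_scale symm idc_sym)
  have QW: "Q = cl_block_matrix s (m - Z *\<^sub>R idc)" by (simp add: Q_def Q_blk)
  show "Q ** matrix_inv Q = mat 1" "matrix_inv Q ** Q = mat 1" using invertible_inv[of Q] dz by (auto simp: Q_def)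
  show "matrix_inv Q = cl_block_matrix s (colE (matrix_inv Q))" "clsym_coeffs s (colE (matrix_inv Q))"
    using inv_clifford[OF sok symW] dz unfolding QW[symmetric] by (auto simp: Q_def)
qed

lemma Phi_val:
  fixes m :: "real^'n::finite^'n^'e set"
  assumes symm: "clsym_coeffs s m" and dz: "det (cl_block_matrix s m - Z *\<^sub>R mat 1) \<noteq> 0"
  defines "Q \<equiv> cl_block_matrix s m - Z *\<^sub>R mat 1"
  shows "Phi Q (Ecl s C i j) (Ecl s C i j) 0 = det Q * 2 ^ CARD('e) * colE (matrix_inv Q) $ C $ i $ j"
proof -
  note f = inv_facts[OF symm dz, folded Q_def]
  have "Phi Q (Ecl s C i j) (Ecl s C i j) 0 = det Q * trace (matrix_inv Q ** Ecl s C i j)"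
    by (simp add: Phi_fact[OF f(1)] Phi_I)
  also have "trace (matrix_inv Q ** Ecl s C i j) = 2 ^ CARD('e) * colE (matrix_inv Q) $ C $ i $ j"
    by (subst f(3)) (rule tr_UE[OF sok f(4)])
  finally show ?thesis by simp
qed

lemma Phi_negI:
  fixes Q U :: "real^'k::finite^'k"
  assumes "Q ** U = mat 1"
  shows "Phi Q (- mat 1) (- mat 1) 0 = - det Q * trace U"
  by (simp add: Phi_fact[OF assms] Phi_I mm_neg trace_def sum_negf)

lemma Psi_negI:
  fixes Q U :: "real^'k::finite^'k"
  assumes "Q ** U = mat 1"
  shows "Psi Q (- mat 1) (- mat 1) = det Q * ((trace U)^2 - trace (U ** U))"
proof -
  have t: "trace (- U) = - trace U" by (simp add: trace_def sum_negf)
  have "(- U) ** (- U) = U ** U" by (simp add: matrix_matrix_mult_def vec_eq_iff sum_negf)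
  then show ?thesis by (simp add: Psi_fact[OF assms] Psi_I mm_neg t power2_eq_square)
qed

lemma G_main:
  fixes m :: "real^'n::finite^'n^'e set"
  assumes symm: "clsym_coeffs s m"
    and dX: "det (cl_block_matrix s m - X *\<^sub>R mat 1) \<noteq> 0"
    and dY: "det (cl_block_matrix s m - Y *\<^sub>R mat 1) \<noteq> 0" and YX: "Y \<noteq> X"
  defines "QX \<equiv> cl_block_matrix s m - X *\<^sub>R mat 1"
  defines "QY \<equiv> cl_block_matrix s m - Y *\<^sub>R mat 1"
  shows "(\<Sum>C\<in>UNIV. \<Sum>i\<in>UNIV. \<Sum>j\<in>UNIV. \<Sum>k\<in>UNIV. \<Sum>l\<in>UNIV. gam_coord s C i j k l *
      (Phi QX (Ecl s C i j) (Ecl s C i j) 0 * Phi QY (Ecl s C k l) (Ecl s C k l) 0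
       + Phi QY (Ecl s C i j) (Ecl s C i j) 0 * Phi QX (Ecl s C k l) (Ecl s C k l) 0)) / 2
    = 2 ^ CARD('e) / (Y - X) * (Phi QX (- mat 1) (- mat 1) 0 * det QY - Phi QY (- mat 1) (- mat 1) 0 * det QX)"
proof -
  note fX = inv_facts[OF symm dX, folded QX_def]
  note fY = inv_facts[OF symm dY, folded QY_def]
  define UX where "UX = matrix_inv QX"
  define UY where "UY = matrix_inv QY"
  define VX where "VX = colE UX"
  define VY where "VY = colE UY"
  define cd where "cd = (2::real) ^ CARD('e)"
  define SS where "SS = (\<Sum>C\<in>UNIV. \<Sum>i\<in>UNIV. \<Sum>j\<in>UNIV. VX$C$i$j * VY$C$i$j)"
  have pX: "Phi QX (Ecl s C i j) (Ecl s C i j) 0 = det QX * cd * VX$C$i$j" for C i j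
    using Phi_val[OF symm dX] by (simp add: QX_def UX_def VX_def cd_def)
  have pY: "Phi QY (Ecl s C i j) (Ecl s C i j) 0 = det QY * cd * VY$C$i$j" for C i j
    using Phi_val[OF symm dY] by (simp add: QY_def UY_def VY_def cd_def)
  have g1: "(\<Sum>C\<in>UNIV. \<Sum>i\<in>UNIV. \<Sum>j\<in>UNIV. \<Sum>k\<in>UNIV. \<Sum>l\<in>UNIV. gam_coord s C i j k l * (VX$C$i$j * VY$C$k$l)) = SS"
    unfolding SS_def by (rule G_alg[OF sok fY(4)[folded UY_def, folded VY_def]])
  have g2: "(\<Sum>C\<in>UNIV. \<Sum>i\<in>UNIV. \<Sum>j\<in>UNIV. \<Sum>k\<in>UNIV. \<Sum>l\<in>UNIV. gam_coord s C i j k l * (VY$C$i$j * VX$C$k$l)) = SS"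
    unfolding SS_def using G_alg[OF sok fX(4)[folded UX_def, folded VX_def], of VY] by (simp add: mult.commute)
  have "(\<Sum>C\<in>UNIV. \<Sum>i\<in>UNIV. \<Sum>j\<in>UNIV. \<Sum>k\<in>UNIV. \<Sum>l\<in>UNIV. gam_coord s C i j k l *
      (Phi QX (Ecl s C i j) (Ecl s C i j) 0 * Phi QY (Ecl s C k l) (Ecl s C k l) 0
       + Phi QY (Ecl s C i j) (Ecl s C i j) 0 * Phi QX (Ecl s C k l) (Ecl s C k l) 0))
    = (det QX * det QY * cd * cd) *
      ((\<Sum>C\<in>UNIV. \<Sum>i\<in>UNIV. \<Sum>j\<in>UNIV. \<Sum>k\<in>UNIV. \<Sum>l\<in>UNIV. gam_coord s C i j k l * (VX$C$i$j * VY$C$k$l))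
      + (\<Sum>C\<in>UNIV. \<Sum>i\<in>UNIV. \<Sum>j\<in>UNIV. \<Sum>k\<in>UNIV. \<Sum>l\<in>UNIV. gam_coord s C i j k l * (VY$C$i$j * VX$C$k$l)))"
    by (simp add: pX pY sum_distrib_left sum.distrib distrib_left mult_ac)
  also have "\<dots> = det QX * det QY * cd * cd * (2 * SS)" by (simp add: g1 g2)
  finally have L: "(\<Sum>C\<in>UNIV. \<Sum>i\<in>UNIV. \<Sum>j\<in>UNIV. \<Sum>k\<in>UNIV. \<Sum>l\<in>UNIV. gam_coord s C i j k l *
      (Phi QX (Ecl s C i j) (Ecl s C i j) 0 * Phi QY (Ecl s C k l) (Ecl s C k l) 0
       + Phi QY (Ecl s C i j) (Ecl s C i j) 0 * Phi QX (Ecl s C k l) (Ecl s C k l) 0)) / 2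
     = det QX * det QY * cd * cd * SS" by simp
  have trXY: "trace (UX ** UY) = cd * SS"
  proof -
    have "trace (UX ** UY) = trace (cl_block_matrix s VX ** cl_block_matrix s VY)"
      using fX(3) fY(3) by (simp add: UX_def UY_def VX_def VY_def)
    also have "\<dots> = cd * SS" unfolding cd_def SS_def
      by (rule tr_BB[OF sok fY(4)[folded UY_def, folded VY_def]])
    finally show ?thesis .
  qed
  have res: "trace UY - trace UX = (Y - X) * trace (UX ** UY)"
    by (rule resolvent[OF fX(1,2) fY(1,2), folded UX_def UY_def]) (simp add: QX_def QY_def algebra_simps)
  have R: "2 ^ CARD('e) / (Y - X) * (Phi QX (- mat 1) (- mat 1) 0 * det QY - Phi QY (- mat 1) (- mat 1) 0 * det QX)
      = cd * det QX * det QY * ((trace UY - trace UX) / (Y - X))"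
    by (simp add: Phi_negI[OF fX(1)] Phi_negI[OF fY(1)] UX_def UY_def cd_def field_simps)
  have "(trace UY - trace UX) / (Y - X) = trace (UX ** UY)" using res YX by simp
  then show ?thesis unfolding L R trXY by (simp add: mult_ac)
qed

end

theorem mainTheorem13:
  fixes s :: "'e::{finite,linorder} \<Rightarrow> 'e \<Rightarrow> real"
    and m :: "real^'n^'n^('e set)"
    and X :: real
  assumes "sign_ok s"
    and "clsym_coeffs s m"
    and "Pcl s m X \<noteq> 0"
  shows "let U = matrix_inv (cl_block_matrix s m - X *\<^sub>R mat 1);
             UC = (\<chi> C i j. U $ (C, i) $ ({}, j)) :: real^'n^'n^('e set);
             P' = (\<lambda>Z. deriv (Pcl s m) Z);
             P'' = deriv (deriv (Pcl s m)) X;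
             p = CARD('e);
             H = (\<lambda>C. \<Sum>A\<in>UNIV. clsgn s A C * clsgn s C A)
         in clsym_coeffs s UC \<and> U = cl_block_matrix s UC
          \<and> (\<forall>Y. Y \<noteq> X \<longrightarrow>
               GammaCl s (\<lambda>x. Pcl s x X) (\<lambda>x. Pcl s x Y) m
                 = 2 ^ p / (Y - X) * (P' X * Pcl s m Y - P' Y * Pcl s m X))
          \<and> LCl s (\<lambda>x. Pcl s x X) m / Pcl s m X
              = GammaCl s (\<lambda>x. ln \<bar>Pcl s x X\<bar>) (\<lambda>x. ln \<bar>Pcl s x X\<bar>) m
                - (1/2) * (\<Sum>A\<in>UNIV. clsgn s A A) * trace (U ** U)
                - 2 ^ (p - 1) * (\<Sum>C\<in>UNIV. clsgn s C C * H C * (trace (UC $ C))^2)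
          \<and> trace (U ** U) = (P' X)^2 / (Pcl s m X)^2 - P'' / Pcl s m X"
proof -
  note sok = assms(1) and symm = assms(2) and nz = assms(3)
  define Q where "Q = cl_block_matrix s m - X *\<^sub>R mat 1"
  define U where "U = matrix_inv Q"
  define V where "V = colE U"
  have PQ: "Pcl s m X = det Q" by (simp add: Q_def Pcl_def)
  have dz: "det Q \<noteq> 0" using nz PQ by simp
  note f = inv_facts[OF sok symm dz[unfolded Q_def], folded Q_def, folded U_def, folded V_def]
  have UCeq: "(\<chi> C i j. U $ (C, i) $ ({}, j)) = V" by (simp add: V_def colE_def)
  have Qm: "\<And>Z. Pcl s m Z = det (cl_block_matrix s m - Z *\<^sub>R mat 1)" by (simp add: Pcl_def)
  have c5: "trace (U ** U) = (deriv (Pcl s m) X)^2 / (Pcl s m X)^2 - deriv (deriv (Pcl s m)) X / Pcl s m X"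
  proof -
    have d1: "deriv (Pcl s m) X = - det Q * trace U"
      unfolding derivP Q_def[symmetric] U_def by (rule Phi_negI[OF sok f(1)[unfolded U_def]])
    have d2: "deriv (deriv (Pcl s m)) X = det Q * ((trace U)^2 - trace (U ** U))"
      unfolding derivP2 Q_def[symmetric] U_def by (rule Psi_negI[OF sok f(1)[unfolded U_def]])
    show ?thesis unfolding d1 d2 PQ using dz by (simp add: field_simps power2_eq_square)
  qed
  have c4: "LCl s (\<lambda>x. Pcl s x X) m / Pcl s m X
              = GammaCl s (\<lambda>x. ln \<bar>Pcl s x X\<bar>) (\<lambda>x. ln \<bar>Pcl s x X\<bar>) m
                - (1/2) * (\<Sum>A\<in>UNIV. clsgn s A A) * trace (U ** U)
                - 2 ^ (CARD('e) - 1) * (\<Sum>C\<in>UNIV. clsgn s C C * (\<Sum>A\<in>UNIV. clsgn s A C * clsgn s C A) * (trace (V $ C))^2)"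
  proof -
    define tr where "tr C i j = trace (U ** Ecl s C i j)" for C i j
    define TT where "TT C i j k l = trace ((U ** Ecl s C i j) ** (U ** Ecl s C k l))" for C i j k l
    have pd2: "pd (pd (\<lambda>x. Pcl s x X) C k l) C i j m = det Q * (tr C i j * tr C k l - TT C i j k l)" for C i j k l
    proof -
      have "pd (pd (\<lambda>x. Pcl s x X) C k l) C i j m = deriv (Phi Q (Ecl s C i j) (Ecl s C k l)) 0"
        unfolding pd_def[of "pd (\<lambda>x. Pcl s x X) C k l"] pd_P_slice Q_def by simp
      also have "\<dots> = Psi Q (Ecl s C i j) (Ecl s C k l)" by (rule DERIV_imp_deriv[OF Phi_deriv])
      also have "\<dots> = det Q * (tr C i j * tr C k l - TT C i j k l)"
        by (simp add: Psi_fact[OF f(1)[unfolded U_def]] Psi_I tr_def TT_def U_def)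
      finally show ?thesis .
    qed
    have pdl: "pd (\<lambda>x. ln \<bar>Pcl s x X\<bar>) C i j m = tr C i j" for C i j
    proof -
      have "pd (\<lambda>x. ln \<bar>Pcl s x X\<bar>) C i j m = Phi Q (Ecl s C i j) (Ecl s C i j) 0 / det Q"
        unfolding pd_lnP[OF nz] pd_P PQ Q_def ..
      also have "\<dots> = tr C i j" using dz
        by (simp add: Phi_fact[OF f(1)[unfolded U_def]] Phi_I tr_def U_def)
      finally show ?thesis .
    qed
    have G: "GammaCl s (\<lambda>x. ln \<bar>Pcl s x X\<bar>) (\<lambda>x. ln \<bar>Pcl s x X\<bar>) m
      = (\<Sum>C\<in>UNIV. \<Sum>i\<in>UNIV. \<Sum>j\<in>UNIV. \<Sum>k\<in>UNIV. \<Sum>l\<in>UNIV. gam_coord s C i j k l * (tr C i j * tr C k l))"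
      unfolding GammaCl_good[OF good_lnP[OF nz] good_lnP[OF nz]] pdl
      by (simp add: sum_divide_distrib)
    have LL: "LCl s (\<lambda>x. Pcl s x X) m / Pcl s m X
      = (\<Sum>C\<in>UNIV. \<Sum>i\<in>UNIV. \<Sum>j\<in>UNIV. \<Sum>k\<in>UNIV. \<Sum>l\<in>UNIV. gam_coord s C i j k l * (tr C i j * tr C k l))
      - (\<Sum>C\<in>UNIV. \<Sum>i\<in>UNIV. \<Sum>j\<in>UNIV. \<Sum>k\<in>UNIV. \<Sum>l\<in>UNIV. gam_coord s C i j k l * TT C i j k l)"
    proof -
      have "LCl s (\<lambda>x. Pcl s x X) m = det Q *
        ((\<Sum>C\<in>UNIV. \<Sum>i\<in>UNIV. \<Sum>j\<in>UNIV. \<Sum>k\<in>UNIV. \<Sum>l\<in>UNIV. gam_coord s C i j k l * (tr C i j * tr C k l))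
      - (\<Sum>C\<in>UNIV. \<Sum>i\<in>UNIV. \<Sum>j\<in>UNIV. \<Sum>k\<in>UNIV. \<Sum>l\<in>UNIV. gam_coord s C i j k l * TT C i j k l))"
        unfolding LCl_def pd2 by (simp add: right_diff_distrib sum_subtractf sum_distrib_left mult_ac)
      then show ?thesis using dz by (simp add: PQ)
    qed
    have TTs: "(\<Sum>C\<in>UNIV. \<Sum>i\<in>UNIV. \<Sum>j\<in>UNIV. \<Sum>k\<in>UNIV. \<Sum>l\<in>UNIV. gam_coord s C i j k l * TT C i j k l)
       = (1/2) * (\<Sum>A\<in>UNIV. clsgn s A A) * trace (U ** U)
         + 2 ^ (CARD('e) - 1) * (\<Sum>C\<in>UNIV. clsgn s C C * (\<Sum>A\<in>UNIV. clsgn s A C * clsgn s C A) * (trace (V $ C))^2)"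
      unfolding TT_def using L_alg[OF sok f(4)] f(3) by simp
    show ?thesis unfolding LL G TTs by simp
  qed
  have c3: "\<forall>Y. Y \<noteq> X \<longrightarrow>
               GammaCl s (\<lambda>x. Pcl s x X) (\<lambda>x. Pcl s x Y) m
                 = 2 ^ CARD('e) / (Y - X) * (deriv (Pcl s m) X * Pcl s m Y - deriv (Pcl s m) Y * Pcl s m X)"
  proof (intro allI impI)
    fix Y assume YX: "Y \<noteq> X"
    define QQ where "QQ Z = cl_block_matrix s m - Z *\<^sub>R mat 1" for Z
    define LF where "LF Y = (\<Sum>C\<in>UNIV. \<Sum>i\<in>UNIV. \<Sum>j\<in>UNIV. \<Sum>k\<in>UNIV. \<Sum>l\<in>UNIV. gam_coord s C i j k l *
      (Phi (QQ X) (Ecl s C i j) (Ecl s C i j) 0 * Phi (QQ Y) (Ecl s C k l) (Ecl s C k l) 0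
       + Phi (QQ Y) (Ecl s C i j) (Ecl s C i j) 0 * Phi (QQ X) (Ecl s C k l) (Ecl s C k l) 0)) / 2" for Y
    define RF where "RF Y = 2 ^ CARD('e) / (Y - X) *
       (Phi (QQ X) (- mat 1) (- mat 1) 0 * det (QQ Y) - Phi (QQ Y) (- mat 1) (- mat 1) 0 * det (QQ X))" for Y
    have lhs: "GammaCl s (\<lambda>x. Pcl s x X) (\<lambda>x. Pcl s x Y) m = LF Y"
      unfolding GammaCl_good[OF good_P good_P] pd_P LF_def QQ_def ..
    have rhs: "2 ^ CARD('e) / (Y - X) * (deriv (Pcl s m) X * Pcl s m Y - deriv (Pcl s m) Y * Pcl s m X) = RF Y"
      unfolding RF_def QQ_def derivP Qm ..
    obtain pp where pp: "\<And>Z. det (cl_block_matrix s m - Z *\<^sub>R mat 1) = poly pp Z"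
      using det_poly[of "cl_block_matrix s m"] by blast
    have "pp \<noteq> 0" using dz pp[of X] by (auto simp: Q_def)
    then have fin0: "finite {Z. poly pp Z = 0}" by (rule poly_roots_finite)
    define S where "S = insert X {Z. poly pp Z = 0}"
    have finS: "finite S" using fin0 by (simp add: S_def)
    have eq: "LF z = RF z" if "z \<notin> S" for z
    proof -
      have zX: "z \<noteq> X" and dzz: "det (cl_block_matrix s m - z *\<^sub>R mat 1) \<noteq> 0"
        using that pp[of z] by (auto simp: S_def)
      show ?thesis unfolding LF_def RF_def QQ_def
        by (rule G_main[OF sok symm dz[unfolded Q_def] dzz zX])
    qed
    have cLF: "isCont LF Y" unfolding LF_def QQ_def
      by (intro continuous_intros cont_Phi) simp
    have cRF: "isCont RF Y" unfolding RF_def QQ_def using YX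
      by (intro continuous_intros cont_Phi cont_det) auto
    show "GammaCl s (\<lambda>x. Pcl s x X) (\<lambda>x. Pcl s x Y) m
                 = 2 ^ CARD('e) / (Y - X) * (deriv (Pcl s m) X * Pcl s m Y - deriv (Pcl s m) Y * Pcl s m X)"
      unfolding lhs rhs by (rule cont_eq_finite[OF cLF cRF finS eq])
  qed
  have main: "clsym_coeffs s V \<and> U = cl_block_matrix s V \<and> (\<forall>Y. Y \<noteq> X \<longrightarrow>
               GammaCl s (\<lambda>x. Pcl s x X) (\<lambda>x. Pcl s x Y) m
                 = 2 ^ CARD('e) / (Y - X) * (deriv (Pcl s m) X * Pcl s m Y - deriv (Pcl s m) Y * Pcl s m X))
      \<and> LCl s (\<lambda>x. Pcl s x X) m / Pcl s m X
              = GammaCl s (\<lambda>x. ln \<bar>Pcl s x X\<bar>) (\<lambda>x. ln \<bar>Pcl s x X\<bar>) m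
                - (1/2) * (\<Sum>A\<in>UNIV. clsgn s A A) * trace (U ** U)
                - 2 ^ (CARD('e) - 1) * (\<Sum>C\<in>UNIV. clsgn s C C * (\<Sum>A\<in>UNIV. clsgn s A C * clsgn s C A) * (trace (V $ C))^2)
      \<and> trace (U ** U) = (deriv (Pcl s m) X)^2 / (Pcl s m X)^2 - deriv (deriv (Pcl s m)) X / Pcl s m X"
    using f(4) f(3) c3 c4 c5 by blast
  show ?thesis unfolding Let_def Q_def[symmetric] U_def[symmetric] UCeq using main by blast
qed

end
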